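(* For every fixed positive integer $k$, the problems $\mathbf{SSP}(\mathcal{M}_{\max,\times}^k)$ and $\mathbf{KP}(\mathcal{M}_{\max,\times}^k)$ are decidable generically in polynomial time with respect to the stratification $\{U_m\}_m$: for each of them there is an algorithm that halts on every input $I\in U$ in time polynomial in $\mathrm{size}_2(I)$, outputs either the correct answer (true/false) or "?", and the set of inputs on which it does not output "?" has asymptotic density $1$.
   Context: $\mathcal{M}_{\max,\times}^k$ is the semigroup $\mathrm{Mat}_k(\mathbb{Z}_{\geq 1})$ with $(A\otimes B)_{ij}=\max_{l}(a_{il}\cdot b_{lj})$. In $W_1^{\otimes x_1}\otimes\cdots\otimes W_n^{\otimes x_n}$ a factor with $x_i=0$ is omitted and the all-zero exponent vector is not allowed. $\mathbf{SSP}(\mathcal{S})$: given $W_1,\dots,W_n,C\in\mathcal{S}$, decide whether some $x\in\{0,1\}^n$, not all zero, satisfies $W_1^{\otimes x_1}\otimes\cdots\otimes W_n^{\otimes x_n}=C$; $\mathbf{KP}(\mathcal{S})$: the same with $x\in\mathbb{Z}_{\ge0}^n$. Sizes: $\mathrm{size}_2(a)=\lfloor\log_2 a\rfloor+1$ for $a\ge1$; $\mathrm{size}_2(A)=\sum_{i,j}\mathrm{size}_2(a_{ij})+k^2-1$; $\mathrm{size}_2(W_1,\dots,W_n,C)=\sum_i\mathrm{size}_2(W_i)+\mathrm{size}_2(C)+n$. $U$ is the set of all tuples $(W_1,\dots,W_n,C)$ with $n\ge0$ and entries in $\mathrm{Mat}_k(\mathbb{Z}_{\geq 1})$; $U_m=\{I\in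 U:\mathrm{size}_2(I)=m\}$. The asymptotic density of $A\subseteq U$ is $\rho(A)=\lim_{m\to\infty}|A\cap U_m|/|U_m|$ (over $m$ with $U_m\ne\emptyset$). *)

theory Defs
  imports Complex_Main
begin

type_synonym mat = "nat list list"
type_synonym inst = "mat list \<times> mat"

definition valid_mat :: "nat \<Rightarrow> mat \<Rightarrow> bool" where
  "valid_mat k A \<longleftrightarrow> length A = k \<and> (\<forall>r\<in>set A. length r = k \<and> (\<forall>a\<in>set r. a \<ge> 1))"

definition mat_mult :: "nat \<Rightarrow> mat \<Rightarrow> mat \<Rightarrow> mat" where
  "mat_mult k A B =
     map (\<lambda>i. map (\<lambda>j. Max ((\<lambda>l. A ! i ! l * B ! l ! j) ` {..<k})) [0..<k]) [0..<k]"

definition mat_prod :: "nat \<Rightarrow> mat list \<Rightarrow> mat" where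
  "mat_prod k As = fold (\<lambda>B acc. mat_mult k acc B) (tl As) (hd As)"

definition factors :: "nat list \<Rightarrow> mat list \<Rightarrow> mat list" where
  "factors xs Ws = concat (map2 (\<lambda>x W. replicate x W) xs Ws)"

definition SSP :: "nat \<Rightarrow> inst \<Rightarrow> bool" where
  "SSP k I = (case I of (Ws, C) \<Rightarrow>
     \<exists>xs. length xs = length Ws \<and> set xs \<subseteq> {0, 1} \<and> (\<exists>x\<in>set xs. x \<noteq> 0)
          \<and> mat_prod k (factors xs Ws) = C)"

definition KP :: "nat \<Rightarrow> inst \<Rightarrow> bool" where
  "KP k I = (case I of (Ws, C) \<Rightarrow>
     \<exists>xs. length xs = length Ws \<and> (\<exists>x\<in>set xs. x \<noteq> 0)
          \<and> mat_prod k (factors xs Ws) = C)"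

definition size2 :: "nat \<Rightarrow> nat" where
  "size2 a = nat \<lfloor>log 2 (real a)\<rfloor> + 1"

definition size2_mat :: "nat \<Rightarrow> mat \<Rightarrow> nat" where
  "size2_mat k A = (\<Sum>i<k. \<Sum>j<k. size2 (A ! i ! j)) + k^2 - 1"

definition size2_inst :: "nat \<Rightarrow> inst \<Rightarrow> nat" where
  "size2_inst k I = (case I of (Ws, C) \<Rightarrow>
     (\<Sum>W\<leftarrow>Ws. size2_mat k W) + size2_mat k C + length Ws)"

definition Uall :: "nat \<Rightarrow> inst set" where
  "Uall k = {(Ws, C). (\<forall>W\<in>set Ws. valid_mat k W) \<and> valid_mat k C}"

definition Um :: "nat \<Rightarrow> nat \<Rightarrow> inst set" where
  "Um k m = {I \<in> Uall k. size2_inst k I = m}"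

definition density_one :: "nat \<Rightarrow> inst set \<Rightarrow> bool" where
  "density_one k A \<longleftrightarrow>
     ((\<lambda>m. real (card (A \<inter> Um k m)) / real (card (Um k m))) \<longlongrightarrow> 1)
       (inf sequentially (principal {m. Um k m \<noteq> {}}))"

fun bits :: "nat \<Rightarrow> nat list" where
  "bits a = (if a < 2 then [a] else bits (a div 2) @ [a mod 2])"

fun join :: "'a list \<Rightarrow> 'a list list \<Rightarrow> 'a list" where
  "join s [] = []"
| "join s [x] = x"
| "join s (x # y # r) = x @ s @ join s (y # r)"

text \<open>Tape symbols: 0 = blank, 1 = bit 0, 2 = bit 1, 3 = entry separator, 4 = matrix separator.
  The length of the encoding equals size2_inst.\<close>
definition encode_mat :: "mat \<Rightarrow> nat list" where
  "encode_mat A = join [3] (map (\<lambda>a. map Suc (bits a)) (concat A))"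

definition encode_inst :: "inst \<Rightarrow> nat list" where
  "encode_inst I = (case I of (Ws, C) \<Rightarrow> join [4] (map encode_mat (Ws @ [C])))"

datatype dir = Lft | Rgt | Stay

text \<open>delta q s = (new state, written symbol, move). Start state 0; halting states
  1 (answer true), 2 (answer false), 3 (answer "?").\<close>
type_synonym tm = "nat \<Rightarrow> nat \<Rightarrow> nat \<times> nat \<times> dir"

definition tm_wf :: "nat \<Rightarrow> nat \<Rightarrow> tm \<Rightarrow> bool" where
  "tm_wf Q S M \<longleftrightarrow> 4 \<le> Q \<and> 5 \<le> S \<and>
     (\<forall>q<Q. \<forall>s<S. case M q s of (q', w, d) \<Rightarrow> q' < Q \<and> w < S)"

type_synonym config = "nat \<times> nat list \<times> nat list"  (* state, reversed left part, head and right part *)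

definition tm_step :: "tm \<Rightarrow> config \<Rightarrow> config" where
  "tm_step M c = (case c of (q, ls, rs) \<Rightarrow>
     if q \<in> {1, 2, 3} then c else
     (let s = (case rs of [] \<Rightarrow> 0 | x # _ \<Rightarrow> x) in
      case M q s of (q', w, d) \<Rightarrow>
        (case d of
           Stay \<Rightarrow> (q', ls, w # tl rs)
         | Rgt \<Rightarrow> (q', w # ls, tl rs)
         | Lft \<Rightarrow> (case ls of [] \<Rightarrow> (q', [], w # tl rs)
                             | l # ls' \<Rightarrow> (q', ls', l # w # tl rs)))))"

definition tm_state_after :: "tm \<Rightarrow> nat \<Rightarrow> nat list \<Rightarrow> nat" where
  "tm_state_after M t x = fst ((tm_step M ^^ t) (0, [], x))"

definition generically_poly :: "nat \<Rightarrow> (inst \<Rightarrow> bool) \<Rightarrow> bool" where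
  "generically_poly k P \<longleftrightarrow>
     (\<exists>M Q S c d. tm_wf Q S M \<and>
        (\<forall>I\<in>Uall k.
           let r = tm_state_after M (c * (size2_inst k I + 1) ^ d) (encode_inst I)
           in r \<in> {1, 2, 3} \<and> (r = 1 \<longrightarrow> P I) \<and> (r = 2 \<longrightarrow> \<not> P I)) \<and>
        density_one k {I \<in> Uall k.
           tm_state_after M (c * (size2_inst k I + 1) ^ d) (encode_inst I) \<noteq> 3})"

end

theory Submission
  imports Defs "HOL-Library.Log_Nat"
begin


definition TMm :: tm where
"TMm q s = (
  if q = 0 then (if s \<in> {1,2,3} then (4+s, 9, Rgt) else (3, s, Stay))
  else if 5 \<le> q \<and> q \<le> 8 then
    (if s = 0 then (3, q-4, Stay) else if s \<le> 4 then (if s = 4 then 8+s else 4+s, q-4, Rgt) else (3, s, Stay))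
  else if 9 \<le> q \<and> q \<le> 12 then
    (if s = 0 then (13, q-8, Stay) else if s \<le> 4 then (8+s, q-8, Rgt) else (3, s, Stay))
  else if q = 13 then
    (if s \<in> {5,6,7} then (13, s, Lft) else if s \<in> {1,2,3} then (13+s, s+4, Lft)
     else if s \<in> {4,8} then (27, s, Lft) else (3, s, Stay))
  else if 14 \<le> q \<and> q \<le> 16 then
    (if s \<in> {1,2,3} then (q, s, Lft) else if s \<in> {4,8} then (q+3, s, Lft) else (3, s, Stay))
  else if 17 \<le> q \<and> q \<le> 19 then
    (if s \<in> {5,6,7} then (q, s, Lft)
     else if s \<in> {1,2,3} then (if s = q - 16 then (q+3, s+4, Lft) else (q+6, s, Lft))
     else if s \<in> {4,8} then (q, 8, Lft)
     else if s \<in> {9,10} then (26, 10, Rgt) else (3, s, Stay))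
  else if 20 \<le> q \<and> q \<le> 22 then
    (if s \<in> {1,2,3} then (q, s, Lft) else if s \<in> {4,8} then (q-3, s, Lft)
     else if s \<in> {9,10} then (26, s, Rgt) else (3, s, Stay))
  else if 23 \<le> q \<and> q \<le> 25 then
    (if s \<in> {1,2,3} then (q, s, Lft) else if s \<in> {4,8} then (q-6, 8, Lft)
     else if s \<in> {9,10} then (26, 10, Rgt) else (3, s, Stay))
  else if q = 26 then (if s = 0 then (13, 0, Lft) else (26, s, Rgt))
  else if q = 27 then
    (if s \<in> {5,6,7,8} then (27, s, Lft) else if s \<in> {1,2,3} then (28, s, Lft)
     else if s \<in> {4,9} then (1, s, Stay) else (3, s, Stay))
  else if q = 28 then
    (if s \<in> {1,2,3,5,6,7} then (28, s, Lft) else if s \<in> {4,8} then (27, s, Lft) else (3, s, Stay))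
  else (3, 0, Stay))"

lemma TMm_wf: "tm_wf 29 11 TMm"
  unfolding tm_wf_def
proof (intro conjI allI impI)
  fix q s :: nat assume q: "q < 29" and s: "s < 11"
  have cs: "q = 0 \<or> (1 \<le> q \<and> q \<le> 4) \<or> (5 \<le> q \<and> q \<le> 8) \<or> (9 \<le> q \<and> q \<le> 12) \<or> q = 13 \<or> (14 \<le> q \<and> q \<le> 16)
    \<or> (17 \<le> q \<and> q \<le> 19) \<or> (20 \<le> q \<and> q \<le> 22) \<or> (23 \<le> q \<and> q \<le> 25) \<or> q = 26 \<or> q = 27 \<or> q = 28"
    using q by linarith
  show "case TMm q s of (q', w, d) \<Rightarrow> q' < 29 \<and> w < 11"
    using cs
  proof (elim disjE)
  qed (use s in \<open>auto simp add: TMm_def\<close>)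
qed simp_all

lemma tr_pf: "TMm 13 s = (if s \<in> {5,6,7} then (13, s, Lft) else if s \<in> {1,2,3} then (13+s, s+4, Lft)
     else if s \<in> {4,8} then (27, s, Lft) else (3, s, Stay))"
  by (simp add: TMm_def split del: if_split cong: if_cong)

lemma tr_carry: "b \<in> {1,2,3} \<Longrightarrow> TMm (13+b) s =
    (if s \<in> {1,2,3} then (13+b, s, Lft) else if s \<in> {4,8} then (16+b, s, Lft) else (3, s, Stay))"
  by (elim insertE emptyE; hypsubst; simp add: TMm_def split del: if_split cong: if_cong)

lemma tr_skip: "b \<in> {1,2,3} \<Longrightarrow> TMm (16+b) s =
    (if s \<in> {5,6,7} then (16+b, s, Lft)
     else if s \<in> {1,2,3} then (if s = b then (19+b, s+4, Lft) else (22+b, s, Lft))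
     else if s \<in> {4,8} then (16+b, 8, Lft)
     else if s \<in> {9,10} then (26, 10, Rgt) else (3, s, Stay))"
  by (elim insertE emptyE; hypsubst; simp add: TMm_def split del: if_split cong: if_cong)

lemma tr_tba: "b \<in> {1,2,3} \<Longrightarrow> TMm (19+b) s =
    (if s \<in> {1,2,3} then (19+b, s, Lft) else if s \<in> {4,8} then (16+b, s, Lft)
     else if s \<in> {9,10} then (26, s, Rgt) else (3, s, Stay))"
  by (elim insertE emptyE; hypsubst; simp add: TMm_def split del: if_split cong: if_cong)

lemma tr_tbk: "b \<in> {1,2,3} \<Longrightarrow> TMm (22+b) s =
    (if s \<in> {1,2,3} then (22+b, s, Lft) else if s \<in> {4,8} then (16+b, 8, Lft)
     else if s \<in> {9,10} then (26, 10, Rgt) else (3, s, Stay))"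
  by (elim insertE emptyE; hypsubst; simp add: TMm_def split del: if_split cong: if_cong)

lemma tr_ret: "TMm 26 s = (if s = 0 then (13, 0, Lft) else (26, s, Rgt))"
  by (simp add: TMm_def split del: if_split cong: if_cong)

lemma tr_fin: "TMm 27 s = (if s \<in> {5,6,7,8} then (27, s, Lft) else if s \<in> {1,2,3} then (28, s, Lft)
     else if s \<in> {4,9} then (1, s, Stay) else (3, s, Stay))"
  by (simp add: TMm_def split del: if_split cong: if_cong)

lemma tr_finskip: "TMm 28 s = (if s \<in> {1,2,3,5,6,7} then (28, s, Lft) else if s \<in> {4,8} then (27, s, Lft) else (3, s, Stay))"
  by (simp add: TMm_def split del: if_split cong: if_cong)

lemma tr_init: "TMm 0 s = (if s \<in> {1,2,3} then (4+s, 9, Rgt) else (3, s, Stay))"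
  by (simp add: TMm_def split del: if_split cong: if_cong)

lemma tr_shu: "x \<in> {1,2,3,4} \<Longrightarrow> TMm (4+x) s =
    (if s = 0 then (3, x, Stay) else if s \<le> 4 then (if s = 4 then 8+s else 4+s, x, Rgt) else (3, s, Stay))"
  by (elim insertE emptyE; hypsubst; simp add: TMm_def split del: if_split cong: if_cong)

lemma tr_shs: "x \<in> {1,2,3,4} \<Longrightarrow> TMm (8+x) s =
    (if s = 0 then (13, x, Stay) else if s \<le> 4 then (8+s, x, Rgt) else (3, s, Stay))"
  by (elim insertE emptyE; hypsubst; simp add: TMm_def split del: if_split cong: if_cong)

abbreviation run :: "nat \<Rightarrow> config \<Rightarrow> config" where
  "run n c \<equiv> (tm_step TMm ^^ n) c"

definition arrive :: "nat \<Rightarrow> nat list \<Rightarrow> nat list \<Rightarrow> config" where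
  "arrive q A X = (q, rev (butlast A), last A # X)"

definition rc :: "nat \<Rightarrow> nat list \<Rightarrow> nat list \<Rightarrow> config" where
  "rc q A X = (q, rev A, X)"

lemma halted_stays: "q \<in> {1,2,3} \<Longrightarrow> (tm_step M ^^ n) (q, l, r) = (q, l, r)"
  by (induction n) (auto simp: tm_step_def)

lemma halted_stays': "fst c \<in> {1,2,3} \<Longrightarrow> (tm_step M ^^ n) c = c"
  by (cases c) (simp add: halted_stays)

lemma arrive_snoc: "arrive q (A @ [h]) X = (q, rev A, h # X)"
  by (simp add: arrive_def)

lemma step_left:
  assumes "TMm q h = (q', w, Lft)" "q \<notin> {1,2,3}" "A \<noteq> []"
  shows "tm_step TMm (arrive q (A @ [h]) X) = arrive q' A (w # X)"
proof -
  have "rev A = last A # rev (butlast A)" using assms(3)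
    by (metis append_butlast_last_id rev.simps(2) rev_append rev_singleton_conv rev_rev_ident) 
  then show ?thesis using assms unfolding arrive_snoc tm_step_def
    by (simp add: arrive_def split: list.splits)
qed

lemma step_right:
  assumes "TMm q h = (q', w, Rgt)" "q \<notin> {1,2,3}"
  shows "tm_step TMm (rc q A (h # X)) = rc q' (A @ [w]) X"
  using assms unfolding rc_def tm_step_def by simp

lemma left_loop:
  assumes "\<forall>x\<in>set v. TMm q x = (q, x, Lft)" "q \<notin> {1,2,3}" "A \<noteq> []"
  shows "run (length v) (arrive q (A @ v) X) = arrive q A (v @ X)"
  using assms(1)
proof (induction v arbitrary: X rule: rev_induct)
  case Nil then show ?case by simp
next
  case (snoc x v)
  have "run (length (v @ [x])) (arrive q (A @ v @ [x]) X) = run (length v) (tm_step TMm (arrive q ((A @ v) @ [x]) X))"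
    by (simp only: length_append_singleton funpow_Suc_right comp_def append_assoc)
  also have "tm_step TMm (arrive q ((A @ v) @ [x]) X) = arrive q (A @ v) (x # X)"
    using snoc.prems assms(2,3) by (intro step_left) auto
  also have "run (length v) (arrive q (A @ v) (x # X)) = arrive q A (v @ x # X)"
    using snoc by simp
  finally show ?case by simp
qed

lemma right_loop:
  assumes "\<forall>x\<in>set v. TMm q x = (q, x, Rgt)" "q \<notin> {1,2,3}"
  shows "run (length v) (rc q A (v @ X)) = rc q (A @ v) X"
  using assms(1)
proof (induction v arbitrary: A)
  case Nil then show ?case by simp
next
  case (Cons x v)
  have "run (length (x # v)) (rc q A ((x # v) @ X)) = run (length v) (tm_step TMm (rc q A (x # (v @ X))))"
    by (simp only: length_Cons funpow_Suc_right comp_def append_Cons)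
  also have "tm_step TMm (rc q A (x # (v @ X))) = rc q (A @ [x]) (v @ X)"
    using Cons.prems assms(2) by (intro step_right) auto
  also have "run (length v) (rc q (A @ [x]) (v @ X)) = rc q ((A @ [x]) @ v) X"
    using Cons by simp
  finally show ?case by simp
qed

lemma run_add: "run (m + n) c = run m (run n c)"
  by (simp add: funpow_add)

lemma run_Suc: "run (Suc n) c = run n (tm_step TMm c)"
  by (simp only: funpow_Suc_right comp_def)

lemma run_one: "run 1 c = tm_step TMm c" by simp

definition blk :: "nat list \<Rightarrow> nat \<Rightarrow> nat list" where
  "blk w k = take (length w - k) w @ map (\<lambda>b. b + 4) (drop (length w - k) w)"

definition bnd :: "bool \<Rightarrow> bool \<Rightarrow> nat" where
  "bnd f d = (if f then (if d then 10 else 9) else (if d then 8 else 4))"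

type_synonym bst = "nat list \<times> nat \<times> bool"

fun wtp :: "bool \<Rightarrow> bst list \<Rightarrow> nat list" where
  "wtp f [] = []"
| "wtp f ((w,k,d) # bs) = bnd f d # blk w k @ wtp False bs"

definition upd :: "nat \<Rightarrow> bst \<Rightarrow> bst" where
  "upd b x = (case x of (w,k,d) \<Rightarrow>
     if k < length w \<and> w ! (length w - Suc k) = b then (w, Suc k, d) else (w, k, True))"

definition okb :: "bst \<Rightarrow> bool" where
  "okb x = (case x of (w,k,d) \<Rightarrow> w \<noteq> [] \<and> set w \<subseteq> {1,2,3} \<and> k \<le> length w)"

abbreviation mk :: "nat list \<Rightarrow> nat list" where "mk xs \<equiv> map (\<lambda>x. x + 4) xs"


lemma skip_block:
  assumes b: "b \<in> {1,2,3}" and u: "set u \<subseteq> {1,2,3}" and mm: "set mm \<subseteq> {1,2,3}"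
    and z: "z \<in> {4,8,9,10}" and A: "z \<in> {4,8} \<Longrightarrow> A \<noteq> []"
  defines "ok \<equiv> (u \<noteq> [] \<and> last u = b)"
  defines "nc \<equiv> (if ok then butlast u @ mk (last u # mm) else u @ mk mm)"
  defines "nz \<equiv> (if ok then z else if z \<in> {4,8} then 8 else 10)"
  shows "run (length u + length mm + 1) (arrive (16+b) (A @ [z] @ u @ mk mm) R) =
    (if z \<in> {4,8} then arrive (16+b) A (nz # nc @ R) else rc 26 (A @ [nz]) (nc @ R))"
proof -
  have s1: "run (length (mk mm)) (arrive (16+b) ((A @ [z] @ u) @ mk mm) R) = arrive (16+b) (A @ [z] @ u) (mk mm @ R)"
    by (rule left_loop) (use b mm in \<open>auto simp: tr_skip\<close>)
  have atz: "tm_step TMm (arrive q (A @ [z]) X) = (if z \<in> {4,8} then arrive (16+b) A (zz # X) else rc 26 (A @ [zz]) X)"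
    if "TMm q z = (if z \<in> {4,8} then (16+b, zz, Lft) else (26, zz, Rgt))" "q \<notin> {1,2,3}" for q zz X
  proof (cases "z \<in> {4,8}")
    case True
    then show ?thesis using that A by (simp add: step_left)
  next
    case False
    then show ?thesis using that by (simp add: arrive_snoc tm_step_def rc_def)
  qed
  show ?thesis
  proof (cases u rule: rev_cases)
    case Nil
    have "run (length u + length mm + 1) (arrive (16+b) (A @ [z] @ u @ mk mm) R)
        = tm_step TMm (run (length (mk mm)) (arrive (16+b) ((A @ [z] @ u) @ mk mm) R))"
      using Nil by simp
    also have "\<dots> = tm_step TMm (arrive (16+b) (A @ [z]) (mk mm @ R))" using s1 Nil by simp
    also have "\<dots> = (if z \<in> {4,8} then arrive (16+b) A (nz # mk mm @ R) else rc 26 (A @ [nz]) (mk mm @ R))"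
      by (rule atz) (use z b Nil in \<open>auto simp: tr_skip nz_def ok_def\<close>)
    also have "\<dots> = (if z \<in> {4,8} then arrive (16+b) A (nz # nc @ R) else rc 26 (A @ [nz]) (nc @ R))"
      using Nil by (simp add: nc_def ok_def)
    finally show ?thesis .
  next
    case (snoc u' t)
    have t: "t \<in> {1,2,3}" and u': "set u' \<subseteq> {1,2,3}" using u snoc by auto
    define q' where "q' = (if t = b then 19 + b else 22 + b)"
    define t' where "t' = (if t = b then t + 4 else t)"
    have st: "tm_step TMm (arrive (16+b) ((A @ [z] @ u') @ [t]) X) = arrive q' (A @ [z] @ u') (t' # X)" for X
      by (rule step_left) (use t b in \<open>auto simp: tr_skip q'_def t'_def\<close>)
    have lp: "run (length u') (arrive q' ((A @ [z]) @ u') X) = arrive q' (A @ [z]) (u' @ X)" for X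
      by (rule left_loop) (use u' b in \<open>auto simp: tr_tba tr_tbk q'_def\<close>)
    have "run (length u + length mm + 1) (arrive (16+b) (A @ [z] @ u @ mk mm) R)
      = tm_step TMm (run (length u') (tm_step TMm (run (length (mk mm)) (arrive (16+b) ((A @ [z] @ u) @ mk mm) R))))"
    proof -
      have "length u + length mm + 1 = 1 + (length u' + (1 + length (mk mm)))" using snoc by simp
      then show ?thesis by (simp only: run_add run_one append_assoc)
    qed
    also have "\<dots> = tm_step TMm (run (length u') (tm_step TMm (arrive (16+b) ((A @ [z] @ u') @ [t]) (mk mm @ R))))"
      using s1 snoc by simp
    also have "\<dots> = tm_step TMm (arrive q' (A @ [z]) (u' @ t' # mk mm @ R))"
      using st lp by simp
    also have "\<dots> = (if z \<in> {4,8} then arrive (16+b) A (nz # u' @ t' # mk mm @ R) else rc 26 (A @ [nz]) (u' @ t' # mk mm @ R))"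
      by (rule atz) (use z b snoc t in \<open>auto simp: tr_tba tr_tbk nz_def ok_def q'_def t'_def\<close>)
    also have "\<dots> = (if z \<in> {4,8} then arrive (16+b) A (nz # nc @ R) else rc 26 (A @ [nz]) (nc @ R))"
      using snoc by (simp add: nc_def ok_def t'_def)
    finally show ?thesis .
  qed
qed

lemma wtp_snoc: "wtp f (bs @ [(w,k,d)]) = wtp f bs @ bnd (f \<and> bs = []) d # blk w k"
  by (induction bs arbitrary: f) auto

lemma wtp_ne: "bs \<noteq> [] \<Longrightarrow> wtp f bs \<noteq> []"
  by (cases bs) auto

lemma wtp_hd: "bs \<noteq> [] \<Longrightarrow> hd (wtp True bs) \<in> {9,10}"
  by (cases bs) (auto simp: bnd_def)

lemma length_blk: "length (blk w k) = length w"
  by (simp add: blk_def)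

lemma upd_fst: "fst (upd b x) = fst x"
  by (cases x) (auto simp: upd_def)

lemma okb_upd: "okb x \<Longrightarrow> okb (upd b x)"
  by (cases x) (auto simp: upd_def okb_def)

lemma upd_blk:
  fixes b :: nat and f :: bool
  assumes "okb (w,k,d)"
  defines "u \<equiv> take (length w - k) w" and "mm \<equiv> drop (length w - k) w"
  defines "ok \<equiv> (u \<noteq> [] \<and> last u = b)"
  shows "(case upd b (w,k,d) of (w',k',d') \<Rightarrow> bnd f d' # blk w' k') =
     (if ok then bnd f d else bnd f True) # (if ok then butlast u @ mk (last u # mm) else u @ mk mm)"
proof -
  have w: "w \<noteq> []" "k \<le> length w" using assms(1) by (auto simp: okb_def)
  have okiff: "ok \<longleftrightarrow> k < length w \<and> w ! (length w - Suc k) = b"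
  proof -
    have "u \<noteq> [] \<longleftrightarrow> k < length w" using w by (auto simp: u_def)
    moreover have "k < length w \<Longrightarrow> last u = w ! (length w - Suc k)"
      using w by (simp add: u_def last_conv_nth)
    ultimately show ?thesis unfolding ok_def by auto
  qed
  show ?thesis
  proof (cases ok)
    case True
    then have k: "k < length w" and e: "w ! (length w - Suc k) = b" using okiff by auto
    have "blk w (Suc k) = butlast u @ mk (last u # mm)"
    proof -
      have "butlast u = take (length w - Suc k) w" using k by (simp add: u_def butlast_take)
      moreover have "drop (length w - Suc k) w = w ! (length w - Suc k) # mm"
        using k unfolding mm_def by (metis Cons_nth_drop_Suc Suc_diff_Suc diff_less zero_less_Suc less_le_trans le_add1 w(1) length_greater_0_conv)
      moreover have "last u = w ! (length w - Suc k)" using k w by (simp add: u_def last_conv_nth)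
      ultimately show ?thesis by (simp add: blk_def)
    qed
    then show ?thesis using True k e by (simp add: upd_def)
  next
    case False
    then show ?thesis using okiff by (auto simp: upd_def blk_def u_def mm_def)
  qed
qed

lemma wpass:
  assumes "bs \<noteq> []" "\<forall>x\<in>set bs. okb x" "b \<in> {1,2,3}"
  shows "run (length (wtp True bs)) (arrive (16+b) (wtp True bs) R)
     = rc 26 [hd (wtp True (map (upd b) bs))] (tl (wtp True (map (upd b) bs)) @ R)"
  using assms(1,2)
proof (induction bs arbitrary: R rule: rev_induct)
  case Nil then show ?case by simp
next
  case (snoc x bs)
  obtain w k d where x: "x = (w,k,d)" by (cases x)
  have okx: "okb (w,k,d)" using snoc.prems x by auto
  define u where "u = take (length w - k) w"
  define mm where "mm = drop (length w - k) w"
  define ok where "ok = (u \<noteq> [] \<and> last u = b)"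
  define nc where "nc = (if ok then butlast u @ mk (last u # mm) else u @ mk mm)"
  define z where "z = bnd (bs = []) d"
  define nz where "nz = (if ok then z else if z \<in> {4,8} then 8 else 10)"
  have u: "set u \<subseteq> {1,2,3}" and mm: "set mm \<subseteq> {1,2,3}" using okx
    by (auto simp: okb_def u_def mm_def dest: in_set_takeD in_set_dropD)
  have blkw: "blk w k = u @ mk mm" by (simp add: blk_def u_def mm_def)
  have lenb: "length (blk w k) = length u + length mm" using blkw by simp
  have newb: "wtp True (map (upd b) (bs @ [x])) = wtp True (map (upd b) bs) @ nz # nc"
  proof -
    obtain w' k' d' where e: "upd b (w,k,d) = (w',k',d')" by (cases "upd b (w,k,d)")
    have "wtp True (map (upd b) (bs @ [x])) = wtp True (map (upd b) bs) @ bnd (bs = []) d' # blk w' k'"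
      using x e by (simp add: wtp_snoc)
    also have "bnd (bs = []) d' # blk w' k' = nz # nc"
      using upd_blk[OF okx, where b=b and f="bs = []"] e
      unfolding nz_def nc_def z_def ok_def u_def mm_def by (auto simp: bnd_def)
    finally show ?thesis .
  qed
  have tape: "wtp True (bs @ [x]) = wtp True bs @ [z] @ u @ mk mm"
    using x by (simp add: wtp_snoc z_def blkw)
  have zin: "z \<in> {4,8,9,10}" by (auto simp: z_def bnd_def)
  show ?case
  proof (cases "bs = []")
    case True
    have "run (length (wtp True (bs @ [x]))) (arrive (16+b) (wtp True (bs @ [x])) R)
        = run (length u + length mm + 1) (arrive (16+b) ([] @ [z] @ u @ mk mm) R)"
      using True tape by simp
    also have "\<dots> = rc 26 ([] @ [nz]) (nc @ R)"
    proof -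
      have sb: "run (length u + length mm + 1) (arrive (16+b) ([] @ [z] @ u @ mk mm) R) =
          (if z \<in> {4,8} then arrive (16+b) [] (nz # nc @ R) else rc 26 ([] @ [nz]) (nc @ R))"
        unfolding nz_def nc_def ok_def by (rule skip_block[OF assms(3) u mm zin]) (use True in \<open>auto simp add: z_def bnd_def split: if_splits\<close>)
      have zn: "(z \<in> {4,8}) = False" using True by (simp add: z_def bnd_def)
      show ?thesis using sb by (simp only: zn if_False)
    qed
    finally show ?thesis using newb True by simp
  next
    case False
    have A: "wtp True bs \<noteq> []" using False by (rule wtp_ne)
    have z48: "z \<in> {4,8}" using False by (auto simp: z_def bnd_def)
    have "run (length (wtp True (bs @ [x]))) (arrive (16+b) (wtp True (bs @ [x])) R)
        = run (length (wtp True bs)) (run (length u + length mm + 1) (arrive (16+b) (wtp True bs @ [z] @ u @ mk mm) R))"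
    proof -
      have l: "length (wtp True (bs @ [x])) = length (wtp True bs) + (length u + length mm + 1)" using tape by simp
      show ?thesis unfolding l unfolding tape by (rule run_add)
    qed
    also have "run (length u + length mm + 1) (arrive (16+b) (wtp True bs @ [z] @ u @ mk mm) R)
        = arrive (16+b) (wtp True bs) (nz # nc @ R)"
    proof -
      have sb: "run (length u + length mm + 1) (arrive (16+b) (wtp True bs @ [z] @ u @ mk mm) R) =
          (if z \<in> {4,8} then arrive (16+b) (wtp True bs) (nz # nc @ R) else rc 26 (wtp True bs @ [nz]) (nc @ R))"
        unfolding nz_def nc_def ok_def by (rule skip_block[OF assms(3) u mm zin]) (use A in simp)
      have zn: "(z \<in> {4,8}) = True" using z48 by simp
      show ?thesis using sb by (simp only: zn if_True)
    qed
    also have "run (length (wtp True bs)) (arrive (16+b) (wtp True bs) (nz # nc @ R))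
        = rc 26 [hd (wtp True (map (upd b) bs))] (tl (wtp True (map (upd b) bs)) @ nz # nc @ R)"
      using snoc.IH[of "nz # nc @ R"] snoc.prems False by auto
    finally show ?thesis using newb False wtp_ne[of "map (upd b) bs" True] by simp
  qed
qed

lemma run_halt_mono:
  assumes "fst (run t c) \<in> {1,2,3}" "t \<le> t'"
  shows "run t' c = run t c"
proof -
  have "t' = (t' - t) + t" using assms(2) by simp
  then have "run t' c = run (t' - t) (run t c)" by (metis run_add)
  also have "\<dots> = run t c" using assms(1) by (rule halted_stays')
  finally show ?thesis .
qed

lemma ret_sweep:
  assumes "\<forall>x\<in>set V. x \<noteq> 0" "tl0 \<in> {[],[0]}" "A @ V \<noteq> []"
  shows "run (1 + length V) (rc 26 A (V @ tl0)) = arrive 13 (A @ V) [0]"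
proof -
  have "run (length V) (rc 26 A (V @ tl0)) = rc 26 (A @ V) tl0"
    by (rule right_loop) (use assms(1) in \<open>auto simp: tr_ret\<close>)
  moreover have "tm_step TMm (rc 26 (A @ V) tl0) = arrive 13 (A @ V) [0]"
  proof -
    have "rev (A @ V) = last (A @ V) # rev (butlast (A @ V))" using assms(3)
      by (metis append_butlast_last_id rev_eq_Cons_iff rev_rev_ident)
    then show ?thesis using assms(2) by (auto simp: rc_def arrive_def tm_step_def tr_ret)
  qed
  ultimately show ?thesis by (simp only: run_add run_one)
qed

lemma length_wtp_upd: "length (wtp f (map (upd b) bs)) = length (wtp f bs)"
proof (induction bs arbitrary: f)
  case Nil then show ?case by simp
next
  case (Cons x bs)
  obtain w k d where x: "x = (w,k,d)" by (cases x)
  obtain w' k' d' where e: "upd b (w,k,d) = (w',k',d')" by (cases "upd b (w,k,d)")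
  have "w' = w" using upd_fst[of b "(w,k,d)"] e by simp
  then show ?case using Cons x e by (simp add: length_blk)
qed

lemma wtp_nz: "\<forall>x\<in>set bs. okb x \<Longrightarrow> 0 \<notin> set (wtp f bs)"
proof (induction bs arbitrary: f)
  case Nil then show ?case by simp
next
  case (Cons x bs)
  obtain w k d where x: "x = (w,k,d)" by (cases x)
  have "set w \<subseteq> {1,2,3}" using Cons.prems x by (auto simp: okb_def)
  then have "0 \<notin> set (blk w k)" by (auto simp: blk_def dest: in_set_takeD)
  then show ?case using Cons x by (auto simp: bnd_def)
qed

lemma pass:
  assumes bs: "bs \<noteq> []" "\<forall>x\<in>set bs. okb x" and b: "b \<in> {1,2,3}"
    and uc: "set uc' \<subseteq> {1,2,3}" and mc: "set mc \<subseteq> {1,2,3}" and tl0: "tl0 \<in> {[],[0]}"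
  shows "\<exists>t \<le> 2 * length (wtp True bs @ [4] @ uc' @ [b] @ mk mc).
    run t (arrive 13 (wtp True bs @ [4] @ uc' @ [b] @ mk mc) tl0)
      = arrive 13 (wtp True (map (upd b) bs) @ [4] @ uc' @ mk (b # mc)) [0]"
proof -
  define W where "W = wtp True bs"
  define W' where "W' = wtp True (map (upd b) bs)"
  have Wne: "W \<noteq> []" and W'ne: "W' \<noteq> []" using bs by (auto simp: W_def W'_def wtp_ne)
  have lW: "length W' = length W" by (simp add: W_def W'_def length_wtp_upd)
  have s1: "run (length (mk mc)) (arrive 13 ((W @ [4] @ uc' @ [b]) @ mk mc) tl0) = arrive 13 (W @ [4] @ uc' @ [b]) (mk mc @ tl0)"
    by (rule left_loop) (use mc in \<open>auto simp: tr_pf\<close>)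
  have s2: "tm_step TMm (arrive 13 ((W @ [4] @ uc') @ [b]) X) = arrive (13+b) (W @ [4] @ uc') ((b+4) # X)" for X
    by (rule step_left) (use b in \<open>auto simp: tr_pf\<close>)
  have s3: "run (length uc') (arrive (13+b) ((W @ [4]) @ uc') X) = arrive (13+b) (W @ [4]) (uc' @ X)" for X
    by (rule left_loop) (use uc b in \<open>auto simp: tr_carry\<close>)
  have s4: "tm_step TMm (arrive (13+b) (W @ [4]) X) = arrive (16+b) W (4 # X)" for X
    by (rule step_left) (use b Wne in \<open>auto simp: tr_carry\<close>)
  have s5: "run (length W) (arrive (16+b) W X) = rc 26 [hd W'] (tl W' @ X)" for X
    unfolding W_def W'_def by (rule wpass[OF bs b])
  define V where "V = tl W' @ 4 # uc' @ (b+4) # mk mc"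
  have Vnz: "\<forall>x\<in>set V. x \<noteq> 0"
  proof -
    have "0 \<notin> set W'" unfolding W'_def by (rule wtp_nz) (use bs okb_upd in auto)
    then have "0 \<notin> set (tl W')" by (meson list.set_sel(2) W'ne)
    then have "\<forall>x\<in>set (tl W'). x \<noteq> 0" by (metis)
    then show ?thesis using uc unfolding V_def by auto
  qed
  have s6: "run (1 + length V) (rc 26 [hd W'] (V @ tl0)) = arrive 13 ([hd W'] @ V) [0]"
    by (rule ret_sweep[OF Vnz tl0]) simp
  have fin: "[hd W'] @ V = W' @ [4] @ uc' @ mk (b # mc)" using W'ne by (simp add: V_def)
  define t where "t = (1 + length V) + (length W + (1 + (length uc' + (1 + length (mk mc)))))"
  have "run t (arrive 13 (W @ [4] @ uc' @ [b] @ mk mc) tl0) = arrive 13 (W' @ [4] @ uc' @ mk (b # mc)) [0]"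
  proof -
    have "run t (arrive 13 (W @ [4] @ uc' @ [b] @ mk mc) tl0)
      = run (1 + length V) (run (length W) (tm_step TMm (run (length uc') (tm_step TMm
          (run (length (mk mc)) (arrive 13 ((W @ [4] @ uc' @ [b]) @ mk mc) tl0))))))"
      unfolding t_def by (simp only: run_add run_one append_assoc)
    also have "\<dots> = run (1 + length V) (rc 26 [hd W'] (V @ tl0))"
      using s1 s2 s3 s4 s5 by (simp add: V_def)
    also have "\<dots> = arrive 13 (W' @ [4] @ uc' @ mk (b # mc)) [0]" using s6 fin by simp
    finally show ?thesis .
  qed
  moreover have "t \<le> 2 * length (W @ [4] @ uc' @ [b] @ mk mc)"
    using lW W'ne Wne by (simp add: t_def V_def)
  ultimately show ?thesis unfolding W_def W'_def by blast
qed

lemma fin_block: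
  assumes u: "set u \<subseteq> {1,2,3}" and mm: "set mm \<subseteq> {1,2,3}"
    and z: "z \<in> {4,8,9,10}" and A: "z \<in> {4,8} \<Longrightarrow> A \<noteq> []"
  shows "(u = [] \<and> z \<in> {4,9} \<longrightarrow> (\<exists>t \<le> length u + length mm + 1.
            fst (run t (arrive 27 (A @ [z] @ u @ mk mm) R)) = 1))
       \<and> (\<not>(u = [] \<and> z \<in> {4,9}) \<and> z \<in> {9,10} \<longrightarrow> (\<exists>t \<le> length u + length mm + 1.
            fst (run t (arrive 27 (A @ [z] @ u @ mk mm) R)) = 3))
       \<and> (\<not>(u = [] \<and> z \<in> {4,9}) \<and> z \<in> {4,8} \<longrightarrow> (\<exists>X.
            run (length u + length mm + 1) (arrive 27 (A @ [z] @ u @ mk mm) R) = arrive 27 A X))"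
proof -
  have s1: "run (length (mk mm)) (arrive 27 ((A @ [z] @ u) @ mk mm) R) = arrive 27 (A @ [z] @ u) (mk mm @ R)"
    by (rule left_loop) (use mm in \<open>auto simp: tr_fin\<close>)
  have atz1: "fst (tm_step TMm (arrive q (A @ [z]) X)) = 1" if "TMm q z = (1, z, Stay)" "q \<notin> {1,2,3}" for q X
    using that by (simp add: arrive_snoc tm_step_def)
  have atz3: "fst (tm_step TMm (arrive q (A @ [z]) X)) = 3" if "TMm q z = (3, z, Stay)" "q \<notin> {1,2,3}" for q X
    using that by (simp add: arrive_snoc tm_step_def)
  show ?thesis
  proof (cases u rule: rev_cases)
    case Nil
    have e: "run (length u + length mm + 1) (arrive 27 (A @ [z] @ u @ mk mm) R)
        = tm_step TMm (arrive 27 (A @ [z]) (mk mm @ R))"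
    proof -
      have "run (length u + length mm + 1) (arrive 27 (A @ [z] @ u @ mk mm) R)
          = run 1 (run (length (mk mm)) (arrive 27 ((A @ [z] @ u) @ mk mm) R))"
        using Nil by (simp only: run_add[symmetric] length_map append_assoc) simp
      then show ?thesis using s1 Nil by simp
    qed
    show ?thesis
    proof (intro conjI impI)
      assume "u = [] \<and> z \<in> {4,9}"
      then have "fst (tm_step TMm (arrive 27 (A @ [z]) (mk mm @ R))) = 1"
        by (intro atz1) (auto simp: tr_fin)
      then show "\<exists>t \<le> length u + length mm + 1. fst (run t (arrive 27 (A @ [z] @ u @ mk mm) R)) = 1"
        using e by (intro exI[of _ "length u + length mm + 1"]) simp
    next
      assume "\<not>(u = [] \<and> z \<in> {4,9}) \<and> z \<in> {9,10}"
      then have "z = 10" using Nil by auto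
      then have "fst (tm_step TMm (arrive 27 (A @ [z]) (mk mm @ R))) = 3"
        by (intro atz3) (auto simp: tr_fin)
      then show "\<exists>t \<le> length u + length mm + 1. fst (run t (arrive 27 (A @ [z] @ u @ mk mm) R)) = 3"
        using e by (intro exI[of _ "length u + length mm + 1"]) simp
    next
      assume "\<not>(u = [] \<and> z \<in> {4,9}) \<and> z \<in> {4,8}"
      then have z8: "z = 8" using Nil by auto
      have "tm_step TMm (arrive 27 (A @ [z]) (mk mm @ R)) = arrive 27 A (8 # mk mm @ R)"
        by (rule step_left) (use z8 A in \<open>auto simp: tr_fin\<close>)
      then show "\<exists>X. run (length u + length mm + 1) (arrive 27 (A @ [z] @ u @ mk mm) R) = arrive 27 A X"
        using e by auto
    qed
  next
    case (snoc u' t)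
    have t: "t \<in> {1,2,3}" and u': "set u' \<subseteq> {1,2,3}" using u snoc by auto
    have st: "tm_step TMm (arrive 27 ((A @ [z] @ u') @ [t]) X) = arrive 28 (A @ [z] @ u') (t # X)" for X
      by (rule step_left) (use t in \<open>auto simp: tr_fin\<close>)
    have lp: "run (length u') (arrive 28 ((A @ [z]) @ u') X) = arrive 28 (A @ [z]) (u' @ X)" for X
      by (rule left_loop) (use u' in \<open>auto simp: tr_finskip\<close>)
    have e: "run (length u + length mm + 1) (arrive 27 (A @ [z] @ u @ mk mm) R)
        = tm_step TMm (arrive 28 (A @ [z]) (u' @ t # mk mm @ R))"
    proof -
      have "length u + length mm + 1 = 1 + (length u' + (1 + length (mk mm)))" using snoc by simp
      then have "run (length u + length mm + 1) (arrive 27 (A @ [z] @ u @ mk mm) R)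
          = tm_step TMm (run (length u') (tm_step TMm (run (length (mk mm)) (arrive 27 ((A @ [z] @ u) @ mk mm) R))))"
        by (simp only: run_add run_one append_assoc)
      then show ?thesis using s1 st lp snoc by simp
    qed
    show ?thesis
    proof (intro conjI impI)
      assume "u = [] \<and> z \<in> {4,9}" then show "\<exists>t \<le> length u + length mm + 1. fst (run t (arrive 27 (A @ [z] @ u @ mk mm) R)) = 1"
        using snoc by simp
    next
      assume "\<not>(u = [] \<and> z \<in> {4,9}) \<and> z \<in> {9,10}"
      then have "fst (tm_step TMm (arrive 28 (A @ [z]) (u' @ t # mk mm @ R))) = 3"
        by (intro atz3) (auto simp: tr_finskip)
      then show "\<exists>t \<le> length u + length mm + 1. fst (run t (arrive 27 (A @ [z] @ u @ mk mm) R)) = 3"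
        using e by (intro exI[of _ "length u + length mm + 1"]) simp
    next
      assume a: "\<not>(u = [] \<and> z \<in> {4,9}) \<and> z \<in> {4,8}"
      have "tm_step TMm (arrive 28 (A @ [z]) (u' @ t # mk mm @ R)) = arrive 27 A (z # u' @ t # mk mm @ R)"
        by (rule step_left) (use a A in \<open>auto simp: tr_finskip\<close>)
      then show "\<exists>X. run (length u + length mm + 1) (arrive 27 (A @ [z] @ u @ mk mm) R) = arrive 27 A X"
        using e by auto
    qed
  qed
qed

definition goodb :: "bst \<Rightarrow> bool" where
  "goodb x = (case x of (w,k,d) \<Rightarrow> k = length w \<and> \<not> d)"

lemma fin_all:
  assumes "bs \<noteq> []" "\<forall>x\<in>set bs. okb x"
  shows "\<exists>t \<le> length (wtp True bs). fst (run t (arrive 27 (wtp True bs) R)) = (if \<exists>x\<in>set bs. goodb x then 1 else 3)"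
  using assms
proof (induction bs arbitrary: R rule: rev_induct)
  case Nil then show ?case by simp
next
  case (snoc x bs)
  obtain w k d where x: "x = (w,k,d)" by (cases x)
  have okx: "okb (w,k,d)" using snoc.prems x by auto
  define u where "u = take (length w - k) w"
  define mm where "mm = drop (length w - k) w"
  define z where "z = bnd (bs = []) d"
  have u: "set u \<subseteq> {1,2,3}" and mm: "set mm \<subseteq> {1,2,3}" using okx
    by (auto simp: okb_def u_def mm_def dest: in_set_takeD in_set_dropD)
  have blkw: "blk w k = u @ mk mm" by (simp add: blk_def u_def mm_def)
  have tape: "wtp True (bs @ [x]) = wtp True bs @ [z] @ u @ mk mm"
    using x by (simp add: wtp_snoc z_def blkw)
  have len: "length (wtp True (bs @ [x])) = length (wtp True bs) + (length u + length mm + 1)"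
    using tape by simp
  have zin: "z \<in> {4,8,9,10}" by (auto simp: z_def bnd_def)
  have gx: "goodb x \<longleftrightarrow> (u = [] \<and> z \<in> {4,9})"
  proof -
    have "u = [] \<longleftrightarrow> k = length w" using okx by (auto simp: u_def okb_def)
    moreover have "z \<in> {4,9} \<longleftrightarrow> \<not> d" by (auto simp: z_def bnd_def)
    ultimately show ?thesis using x by (auto simp: goodb_def)
  qed
  have A: "z \<in> {4,8} \<Longrightarrow> wtp True bs \<noteq> []"
    using wtp_ne[of bs True] by (auto simp: z_def bnd_def split: if_splits)
  note fb = fin_block[OF u mm zin A, of R]
  show ?case
  proof (cases "goodb x")
    case True
    then obtain t where "t \<le> length u + length mm + 1" "fst (run t (arrive 27 (wtp True bs @ [z] @ u @ mk mm) R)) = 1"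
      using fb gx by auto
    then show ?thesis using True tape len by (intro exI[of _ t]) auto
  next
    case False
    show ?thesis
    proof (cases "bs = []")
      case True
      then have "z \<in> {9,10}" by (auto simp: z_def bnd_def)
      then obtain t where "t \<le> length u + length mm + 1" "fst (run t (arrive 27 (wtp True bs @ [z] @ u @ mk mm) R)) = 3"
        using fb gx False by auto
      then show ?thesis using True False tape len by (intro exI[of _ t]) auto
    next
      case bsne: False
      then have "z \<in> {4,8}" by (auto simp: z_def bnd_def)
      then obtain X where X: "run (length u + length mm + 1) (arrive 27 (wtp True bs @ [z] @ u @ mk mm) R) = arrive 27 (wtp True bs) X"
        using fb gx False by auto
      obtain t where t: "t \<le> length (wtp True bs)" "fst (run t (arrive 27 (wtp True bs) X)) = (if \<exists>x\<in>set bs. goodb x then 1 else 3)"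
        using snoc.IH[of X] snoc.prems bsne by auto
      have "run (t + (length u + length mm + 1)) (arrive 27 (wtp True (bs @ [x])) R) = run t (arrive 27 (wtp True bs) X)"
        using X tape by (simp only: run_add)
      then show ?thesis using t False len by (intro exI[of _ "t + (length u + length mm + 1)"]) auto
    qed
  qed
qed


definition sh :: "bool \<Rightarrow> nat \<Rightarrow> nat" where "sh seen x = (if seen then 8 + x else 4 + x)"

lemma shift_loop:
  assumes "x \<in> {1,2,3,4}" "set ys \<subseteq> {1,2,3,4}"
  shows "run (length ys) (rc (sh seen x) A ys) = rc (sh (seen \<or> 4 \<in> set ys) (last (x # ys))) (A @ butlast (x # ys)) []"
  using assms
proof (induction ys arbitrary: A x seen)
  case Nil then show ?case by simp
next
  case (Cons y ys)
  have y: "y \<in> {1,2,3,4}" using Cons.prems by auto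
  have "tm_step TMm (rc (sh seen x) A (y # ys)) = rc (sh (seen \<or> y = 4) y) (A @ [x]) ys"
  proof (rule step_right)
    have y0: "y \<noteq> 0" "y \<le> 4" using y by auto
    show "TMm (sh seen x) y = (sh (seen \<or> y = 4) y, x, Rgt)"
    proof (cases seen)
      case True then show ?thesis using Cons.prems(1) y0 by (simp add: sh_def tr_shs split del: if_split)
    next
      case False then show ?thesis using Cons.prems(1) y0 by (simp add: sh_def tr_shu split del: if_split)
    qed
    show "sh seen x \<notin> {1,2,3}" using Cons.prems(1) by (auto simp: sh_def)
  qed
  then have "run (length (y # ys)) (rc (sh seen x) A (y # ys)) = run (length ys) (rc (sh (seen \<or> y = 4) y) (A @ [x]) ys)"
    by (simp only: length_Cons run_Suc)
  also have "\<dots> = rc (sh ((seen \<or> y = 4) \<or> 4 \<in> set ys) (last (y # ys))) ((A @ [x]) @ butlast (y # ys)) []"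
    using Cons.IH[where A="A @ [x]" and x=y and seen="seen \<or> y = 4"] Cons.prems y by simp
  also have "\<dots> = rc (sh (seen \<or> 4 \<in> set (y # ys)) (last (x # y # ys))) (A @ butlast (x # y # ys)) []"
    by (simp add: disj_commute disj_left_commute)
  finally show ?case .
qed

lemma init_phase:
  assumes "x0 \<in> {1,2,3}" "set xs \<subseteq> {1,2,3,4}"
  shows "run (length (x0 # xs) + 1) (0, [], x0 # xs) = arrive (if 4 \<in> set xs then 13 else 3) (9 # x0 # xs) []"
proof -
  have s0: "tm_step TMm (0, [], x0 # xs) = rc (sh False x0) [9] xs"
    using assms(1) by (auto simp: tm_step_def tr_init rc_def sh_def)
  have sl: "run (length xs) (rc (sh False x0) [9] xs) = rc (sh (4 \<in> set xs) (last (x0 # xs))) ([9] @ butlast (x0 # xs)) []"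
    using shift_loop[of x0 xs False "[9]"] assms by auto
  have l: "last (x0 # xs) \<in> {1,2,3,4}"
  proof -
    have "last (x0 # xs) \<in> set (x0 # xs)" by (rule last_in_set) simp
    moreover have "set (x0 # xs) \<subseteq> {1,2,3,4}" using assms by auto
    ultimately show ?thesis by blast
  qed
  have se: "tm_step TMm (rc (sh sn l) B []) = arrive (if sn then 13 else 3) (B @ [l]) []" if "l \<in> {1,2,3,4}" for sn l B
  proof (cases sn)
    case True then show ?thesis using that by (simp add: tm_step_def rc_def arrive_def sh_def tr_shs)
  next
    case False then show ?thesis using that by (simp add: tm_step_def rc_def arrive_def sh_def tr_shu)
  qed
  have "run (length (x0 # xs) + 1) (0, [], x0 # xs) = tm_step TMm (run (length xs) (tm_step TMm (0, [], x0 # xs)))"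
  proof -
    have eq: "length (x0 # xs) + 1 = 1 + (length xs + 1)" by simp
    show ?thesis by (simp only: eq run_add run_one)
  qed
  also have "\<dots> = arrive (if 4 \<in> set xs then 13 else 3) (([9] @ butlast (x0 # xs)) @ [last (x0 # xs)]) []"
    using s0 sl se[OF l] by simp
  also have "([9] @ butlast (x0 # xs)) @ [last (x0 # xs)] = 9 # x0 # xs" by simp
  finally show ?thesis .
qed

lemma dropS: "p < length xs \<Longrightarrow> drop (length xs - Suc p) xs = xs ! (length xs - Suc p) # drop (length xs - p) xs"
  by (metis Cons_nth_drop_Suc Suc_diff_Suc diff_less zero_less_Suc less_le_trans le_add1 le_less_trans not_less0 length_greater_0_conv list.size(3) zero_less_diff)

definition binv :: "nat list \<Rightarrow> nat \<Rightarrow> bst \<Rightarrow> bool" where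
  "binv c p x = (case x of (w,k,d) \<Rightarrow> okb (w,k,d) \<and>
     ((\<not>d) = (p \<le> length w \<and> drop (length w - p) w = drop (length c - p) c)) \<and> (\<not>d \<longrightarrow> k = p))"

lemma inv_step:
  assumes p: "p < length c" and iv: "binv c p x"
  shows "binv c (Suc p) (upd (c ! (length c - Suc p)) x)"
proof -
  obtain w k d where x: "x = (w,k,d)" by (cases x)
  define b where "b = c ! (length c - Suc p)"
  have ok: "okb (w,k,d)" and e1: "(\<not>d) = (p \<le> length w \<and> drop (length w - p) w = drop (length c - p) c)"
    and e2: "\<not>d \<longrightarrow> k = p" using iv x by (auto simp: binv_def)
  have dc: "drop (length c - Suc p) c = b # drop (length c - p) c" using p by (simp add: dropS b_def)
  have imp: "Suc p \<le> length w \<and> drop (length w - Suc p) w = drop (length c - Suc p) c \<Longrightarrow>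
      p \<le> length w \<and> drop (length w - p) w = drop (length c - p) c \<and> w ! (length w - Suc p) = b"
  proof -
    assume a: "Suc p \<le> length w \<and> drop (length w - Suc p) w = drop (length c - Suc p) c"
    have "drop (length w - Suc p) w = w ! (length w - Suc p) # drop (length w - p) w"
      using a by (intro dropS) simp
    then show ?thesis using a dc by simp
  qed
  show ?thesis
  proof (cases "k < length w \<and> w ! (length w - Suc k) = b")
    case True
    then have u: "upd b x = (w, Suc k, d)" using x by (simp add: upd_def)
    have okn: "okb (w, Suc k, d)" using ok True by (auto simp: okb_def)
    show ?thesis
    proof (cases d)
      case False
      then have k: "k = p" and sp: "p \<le> length w" "drop (length w - p) w = drop (length c - p) c" using e1 e2 by auto
      have "drop (length w - Suc p) w = w ! (length w - Suc p) # drop (length w - p) w"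
        using True k by (intro dropS) simp
      then have "drop (length w - Suc p) w = drop (length c - Suc p) c" using True k sp dc by simp
      then show ?thesis using u okn False k True unfolding b_def[symmetric] by (simp add: binv_def)
    next
      case dT: True
      then show ?thesis using u okn imp e1 unfolding b_def[symmetric] by (auto simp: binv_def)
    qed
  next
    case False
    then have u: "upd b x = (w, k, True)" using x by (simp add: upd_def)
    have "\<not> (Suc p \<le> length w \<and> drop (length w - Suc p) w = drop (length c - Suc p) c)"
    proof
      assume a: "Suc p \<le> length w \<and> drop (length w - Suc p) w = drop (length c - Suc p) c"
      then have "\<not> d" "w ! (length w - Suc p) = b" using imp e1 by auto
      then show False using False e2 a by auto
    qed
    then show ?thesis using u ok unfolding b_def[symmetric] by (simp add: binv_def okb_def)
  qed
qed

lemma inv_final: "binv c (length c) x \<Longrightarrow> goodb x \<longleftrightarrow> fst x = c"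
  by (cases x) (auto simp: binv_def goodb_def)

fun bsP :: "nat list \<Rightarrow> bst list \<Rightarrow> nat \<Rightarrow> bst list" where
  "bsP c bs 0 = bs"
| "bsP c bs (Suc p) = map (upd (c ! (length c - Suc p))) (bsP c bs p)"

lemma bsP_inv: "p \<le> length c \<Longrightarrow> \<forall>x\<in>set bs. binv c 0 x \<Longrightarrow> \<forall>x\<in>set (bsP c bs p). binv c p x"
  by (induction p) (auto intro: inv_step)

lemma bsP_len: "length (wtp f (bsP c bs p)) = length (wtp f bs)"
  by (induction p) (auto simp: length_wtp_upd)

lemma bsP_ne: "bs \<noteq> [] \<Longrightarrow> bsP c bs p \<noteq> []"
  by (induction p) auto

lemma bsP_fst: "map fst (bsP c bs p) = map fst bs"
  by (induction p) (auto simp: upd_fst comp_def)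

lemma join_snoc: "xs \<noteq> [] \<Longrightarrow> join s (xs @ [z]) = join s xs @ s @ z"
proof (induction s xs rule: join.induct)
  case (1 s) then show ?case by simp
next
  case (2 s x) then show ?case by simp
next
  case (3 s x y' r) then show ?case by simp
qed

lemma wtp_init: "ws \<noteq> [] \<Longrightarrow> wtp f (map (\<lambda>w. (w, 0, False)) ws) = bnd f False # join [4] ws"
proof (induction ws arbitrary: f rule: induct_list012)
  case 1 then show ?case by simp
next
  case (2 x) then show ?case by (simp add: blk_def)
next
  case (3 x y r) then show ?case by (simp add: blk_def bnd_def)
qed

lemma set_join: "set (join s xs) \<subseteq> set s \<union> \<Union> (set ` set xs)"
  by (induction s xs rule: join.induct) auto

lemma passes:
  assumes bs: "bs \<noteq> []" "\<forall>x\<in>set bs. binv c 0 x" and c: "set c \<subseteq> {1,2,3}"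
    and p: "p \<le> length c"
  shows "\<exists>t \<le> p * (2 * length (wtp True bs @ [4] @ c)). \<exists>tl0\<in>{[],[0]}.
     run t (arrive 13 (wtp True bs @ [4] @ c) [])
       = arrive 13 (wtp True (bsP c bs p) @ [4] @ take (length c - p) c @ mk (drop (length c - p) c)) tl0"
  using p
proof (induction p)
  case 0 then show ?case by (intro exI[of _ 0]) auto
next
  case (Suc p)
  then obtain t tl0 where t: "t \<le> p * (2 * length (wtp True bs @ [4] @ c))" "tl0 \<in> {[],[0]}"
    "run t (arrive 13 (wtp True bs @ [4] @ c) [])
       = arrive 13 (wtp True (bsP c bs p) @ [4] @ take (length c - p) c @ mk (drop (length c - p) c)) tl0"
    by auto
  define b where "b = c ! (length c - Suc p)"
  define uc' where "uc' = take (length c - Suc p) c"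
  define mc where "mc = drop (length c - p) c"
  have pl: "p < length c" using Suc.prems by simp
  have tk: "take (length c - p) c = uc' @ [b]"
  proof -
    have "length c - p = Suc (length c - Suc p)" using pl by simp
    then show ?thesis unfolding uc'_def b_def using pl by (simp add: take_Suc_conv_app_nth)
  qed
  have dr: "drop (length c - Suc p) c = b # mc" using pl by (simp add: dropS b_def mc_def)
  have bin: "b \<in> {1,2,3}"
  proof -
    have "length c - Suc p < length c" using pl by simp
    then have "b \<in> set c" unfolding b_def by (rule nth_mem)
    then show ?thesis using c by auto
  qed
  have ucs: "set uc' \<subseteq> {1,2,3}" using c by (auto simp: uc'_def dest: in_set_takeD)
  have mcs: "set mc \<subseteq> {1,2,3}" using c by (auto simp: mc_def dest: in_set_dropD)
  have okP: "\<forall>x\<in>set (bsP c bs p). okb x" using bsP_inv[of p c bs] bs pl by (auto simp: binv_def split: prod.splits)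
  have neP: "bsP c bs p \<noteq> []" using bs by (simp add: bsP_ne)
  obtain t2 where t2: "t2 \<le> 2 * length (wtp True (bsP c bs p) @ [4] @ uc' @ [b] @ mk mc)"
    "run t2 (arrive 13 (wtp True (bsP c bs p) @ [4] @ uc' @ [b] @ mk mc) tl0)
      = arrive 13 (wtp True (map (upd b) (bsP c bs p)) @ [4] @ uc' @ mk (b # mc)) [0]"
    using pass[OF neP okP bin ucs mcs t(2)] by blast
  have len: "length (wtp True (bsP c bs p) @ [4] @ uc' @ [b] @ mk mc) = length (wtp True bs @ [4] @ c)"
  proof -
    have "length (uc' @ [b] @ mc) = length c" using pl by (simp add: uc'_def mc_def)
    then show ?thesis by (simp add: bsP_len)
  qed
  have "run (t2 + t) (arrive 13 (wtp True bs @ [4] @ c) [])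
     = arrive 13 (wtp True (bsP c bs (Suc p)) @ [4] @ take (length c - Suc p) c @ mk (drop (length c - Suc p) c)) [0]"
    using t(3) t2(2) tk dr by (simp add: run_add uc'_def b_def mc_def)
  moreover have "t2 + t \<le> Suc p * (2 * length (wtp True bs @ [4] @ c))"
    using t(1) t2(1) len by simp
  ultimately show ?case by blast
qed


lemma tm_strings:
  assumes ws: "\<forall>w\<in>set ws. w \<noteq> [] \<and> set w \<subseteq> {1,2,3}" and c: "c \<noteq> []" "set c \<subseteq> {1,2,3}"
  shows "\<exists>t \<le> 5 * (length (join [4] (ws @ [c])) + 1)^2.
           fst (run t (0, [], join [4] (ws @ [c]))) = (if c \<in> set ws then 1 else 3)"
proof (cases "ws = []")
  case True
  then have x: "join [4] (ws @ [c]) = c" by simp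
  obtain x0 xs where c0: "c = x0 # xs" using c by (cases c) auto
  have x0: "x0 \<in> {1,2,3}" and xs: "set xs \<subseteq> {1,2,3,4}" "4 \<notin> set xs" using c c0 by auto
  have "fst (run (length c + 1) (0, [], c)) = 3"
    using init_phase[OF x0 xs(1)] xs(2) c0 by (simp add: arrive_def)
  then show ?thesis using True x by (intro exI[of _ "length c + 1"]) (auto simp: power2_eq_square)
next
  case False
  define x where "x = join [4] (ws @ [c])"
  define J where "J = join [4] ws"
  have xJ: "x = J @ [4] @ c" using False by (simp add: x_def J_def join_snoc)
  obtain w1 ws' where ws1: "ws = w1 # ws'" using False by (cases ws) auto
  have w1: "w1 \<noteq> []" "set w1 \<subseteq> {1,2,3}" using ws ws1 by auto
  have Jw: "J = w1 @ (if ws' = [] then [] else [4] @ join [4] ws')"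
    unfolding J_def ws1 by (cases ws') auto
  obtain x0 xs where x0xs: "x = x0 # xs" using w1 xJ Jw by (cases w1) auto
  have x0: "x0 \<in> {1,2,3}" using x0xs xJ Jw w1 by (cases w1) auto
  have J4: "set J \<subseteq> {1,2,3,4}" using set_join[of "[4]" ws] ws unfolding J_def by fastforce
  have xs: "set xs \<subseteq> {1,2,3,4}" "4 \<in> set xs"
  proof -
    have "set x \<subseteq> {1,2,3,4}" using xJ J4 c by auto
    then show "set xs \<subseteq> {1,2,3,4}" using x0xs by auto
    have "J \<noteq> []" using Jw w1 by simp
    then show "4 \<in> set xs" using x0xs xJ by (cases J) auto
  qed
  define bs0 where "bs0 = map (\<lambda>w. (w, 0::nat, False)) ws"
  have tape: "9 # x = wtp True bs0 @ [4] @ c"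
    using wtp_init[OF False, of True] xJ by (simp add: bs0_def J_def bnd_def)
  have bs0ne: "bs0 \<noteq> []" using False by (simp add: bs0_def)
  have inv0: "\<forall>y\<in>set bs0. binv c 0 y" using ws by (auto simp: bs0_def binv_def okb_def)
  have s1: "run (length x + 1) (0, [], x) = arrive 13 (wtp True bs0 @ [4] @ c) []"
    using init_phase[OF x0 xs(1)] xs(2) x0xs tape by simp
  obtain t2 tl0 where t2: "t2 \<le> length c * (2 * length (wtp True bs0 @ [4] @ c))" "tl0 \<in> {[],[0]}"
      "run t2 (arrive 13 (wtp True bs0 @ [4] @ c) [])
       = arrive 13 (wtp True (bsP c bs0 (length c)) @ [4] @ mk c) tl0"
    using passes[OF bs0ne inv0 c(2) le_refl] by auto
  define W where "W = wtp True (bsP c bs0 (length c))"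
  have neP: "bsP c bs0 (length c) \<noteq> []" using bs0ne by (simp add: bsP_ne)
  have Wne: "W \<noteq> []" using neP by (simp add: W_def wtp_ne)
  have s3: "run (length (mk c)) (arrive 13 ((W @ [4]) @ mk c) tl0) = arrive 13 (W @ [4]) (mk c @ tl0)"
    by (rule left_loop) (use c in \<open>auto simp: tr_pf\<close>)
  have s4: "tm_step TMm (arrive 13 (W @ [4]) X) = arrive 27 W (4 # X)" for X
    by (rule step_left) (use Wne in \<open>auto simp: tr_pf\<close>)
  have invP: "\<forall>y\<in>set (bsP c bs0 (length c)). binv c (length c) y"
    using bsP_inv[OF le_refl inv0] .
  have okP: "\<forall>y\<in>set (bsP c bs0 (length c)). okb y" using invP by (auto simp: binv_def split: prod.splits)
  obtain t5 where t5: "t5 \<le> length W"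
    "fst (run t5 (arrive 27 W (4 # mk c @ tl0))) = (if \<exists>y\<in>set (bsP c bs0 (length c)). goodb y then 1 else 3)"
    using fin_all[OF neP okP] unfolding W_def by blast
  have gd: "(\<exists>y\<in>set (bsP c bs0 (length c)). goodb y) \<longleftrightarrow> c \<in> set ws"
  proof -
    have "(\<exists>y\<in>set (bsP c bs0 (length c)). goodb y) \<longleftrightarrow> (\<exists>y\<in>set (bsP c bs0 (length c)). fst y = c)"
      using invP inv_final by blast
    also have "\<dots> \<longleftrightarrow> c \<in> set (map fst (bsP c bs0 (length c)))" by force
    also have "\<dots> \<longleftrightarrow> c \<in> set ws" by (simp add: bsP_fst bs0_def comp_def)
    finally show ?thesis .
  qed
  define T where "T = t5 + (1 + (length (mk c) + (t2 + (length x + 1))))"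
  have "run T (0, [], x) = run t5 (tm_step TMm (run (length (mk c)) (run t2 (run (length x + 1) (0, [], x)))))"
    unfolding T_def by (simp only: run_add run_one)
  also have "\<dots> = run t5 (arrive 27 W (4 # mk c @ tl0))"
    using s1 t2(3) s3 s4 by (simp add: W_def)
  finally have r: "fst (run T (0, [], x)) = (if c \<in> set ws then 1 else 3)" using t5(2) gd by simp
  have lW: "length (wtp True bs0 @ [4] @ c) = length x + 1"
    using arg_cong[OF tape, of length] by simp
  have lWW: "length W \<le> length x + 1" using lW by (simp add: W_def bsP_len)
  have lc: "length c \<le> length x" using xJ by simp
  have t2': "t2 \<le> length c * (2 * (length x + 1))" using t2(1) by (simp only: lW)
  define Q where "Q = (length x + 1) * (length x + 1)"
  have P: "length c * (2 * (length x + 1)) \<le> 2 * Q"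
  proof -
    have "length c * (2 * (length x + 1)) \<le> (length x + 1) * (2 * (length x + 1))"
      using lc by (intro mult_right_mono) auto
    also have "\<dots> = 2 * Q" unfolding Q_def by (simp only: mult.commute mult.left_commute)
    finally show ?thesis .
  qed
  have xQ: "length x + 1 \<le> Q" unfolding Q_def by simp
  have hm: "length (mk c) = length c" by simp
  have "T \<le> 5 * Q" using t2' t5(1) lWW P xQ lc hm unfolding T_def by linarith
  also have "5 * Q = 5 * (length x + 1)^2" by (simp add: Q_def power2_eq_square)
  finally show ?thesis using r unfolding x_def by blast
qed




lemma size2_floorlog: "a > 0 \<Longrightarrow> size2 a = floorlog 2 a"
  by (simp add: size2_def floorlog_def)

lemma size2_bounds: "a > 0 \<Longrightarrow> 2 ^ (size2 a - 1) \<le> a \<and> a < 2 ^ size2 a"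
  using floorlog_bounds[of a 2] by (simp add: size2_floorlog)

lemma size2_ge1: "size2 a \<ge> 1"
  by (simp add: size2_def)

lemma size2_eqI: "2 ^ (s - 1) \<le> a \<Longrightarrow> a < 2 ^ s \<Longrightarrow> s \<ge> 1 \<Longrightarrow> size2 a = s"
proof -
  assume a: "2 ^ (s - 1) \<le> a" "a < 2 ^ s" "s \<ge> 1"
  have "a > 0" using a(1) by (metis less_le_trans zero_less_numeral zero_less_power)
  moreover have "floorlog 2 a \<le> s" using a by (intro floorlog_leI) auto
  moreover have "s \<le> floorlog 2 a" using a by (intro floorlog_geI) auto
  ultimately show ?thesis by (simp add: size2_floorlog)
qed

lemma size2_iff: "a \<ge> 1 \<and> size2 a = s \<longleftrightarrow> s \<ge> 1 \<and> 2 ^ (s - 1) \<le> a \<and> a < 2 ^ s"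
proof
  assume "a \<ge> 1 \<and> size2 a = s" then show "s \<ge> 1 \<and> 2 ^ (s - 1) \<le> a \<and> a < 2 ^ s"
    using size2_bounds[of a] size2_ge1[of a] by auto
next
  assume h: "s \<ge> 1 \<and> 2 ^ (s - 1) \<le> a \<and> a < 2 ^ s"
  then have "a \<ge> 1" by (metis le_trans one_le_numeral one_le_power)
  then show "a \<ge> 1 \<and> size2 a = s" using h size2_eqI by auto
qed

lemma card_size2: "card {a::nat. a \<ge> 1 \<and> size2 a = s} = (if s \<ge> 1 then 2 ^ (s - 1) else 0)"
proof (cases "s \<ge> 1")
  case True
  have "{a::nat. a \<ge> 1 \<and> size2 a = s} = {2 ^ (s - 1) ..< 2 ^ s}"
  proof (rule set_eqI)
    fix a show "a \<in> {a::nat. a \<ge> 1 \<and> size2 a = s} \<longleftrightarrow> a \<in> {2 ^ (s - 1) ..< 2 ^ s}"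
      using size2_iff[of a s] True by auto
  qed
  moreover have "(2::nat) ^ s - 2 ^ (s - 1) = 2 ^ (s - 1)"
    using True by (metis Suc_diff_le diff_Suc_1 mult_2 power_Suc diff_add_inverse2 le_add_diff_inverse2 add_diff_cancel_right')
  ultimately show ?thesis using True by simp
next
  case False
  then have "s = 0" by simp
  then have E: "{a::nat. a \<ge> 1 \<and> size2 a = s} = {}" using size2_ge1 by (auto simp: Suc_le_eq)
  have "card {a::nat. a \<ge> 1 \<and> size2 a = s} = 0" by (subst E) simp
  then show ?thesis using False by simp
qed

lemma bits_lt2: "a < 2 \<Longrightarrow> bits a = [a]" by simp
lemma bits_ge2: "\<not> a < 2 \<Longrightarrow> bits a = bits (a div 2) @ [a mod 2]" by simp
declare bits.simps [simp del]

lemma length_bits: "a \<ge> 1 \<Longrightarrow> length (bits a) = size2 a"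
proof (induction a rule: bits.induct)
  case (1 a)
  show ?case
  proof (cases "a < 2")
    case True
    then have "a = 1" using 1 by simp
    then show ?thesis by (simp add: size2_def bits_lt2)
  next
    case False
    then have h: "length (bits (a div 2)) = size2 (a div 2)" using 1 by simp
    have "size2 a = size2 (a div 2) + 1"
      using False compute_floorlog[of 2 a] by (simp add: size2_floorlog)
    then show ?thesis using False h by (simp add: bits_ge2)
  qed
qed

lemma bits_ne: "bits a \<noteq> []"
  by (cases "a < 2") (auto simp: bits_lt2 bits_ge2)


lemma set_bits': "a \<ge> 1 \<Longrightarrow> set (bits a) \<subseteq> {0, 1}"
proof (induction a rule: bits.induct)
  case (1 a)
  show ?case
  proof (cases "a < 2")
    case True then show ?thesis using 1 by (simp add: bits_lt2)
  next
    case False then show ?thesis using 1 by (auto simp: bits_ge2)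
  qed
qed

lemma bits_inj: "bits a = bits b \<Longrightarrow> a = b"
proof (induction a arbitrary: b rule: bits.induct)
  case (1 a)
  show ?case
  proof (cases "a < 2")
    case True
    show ?thesis
    proof (cases "b < 2")
      case True then show ?thesis using \<open>a < 2\<close> 1(2) by (simp add: bits_lt2)
    next
      case False
      then have "length (bits b) = length (bits (b div 2)) + 1" by (simp add: bits_ge2)
      moreover have "bits (b div 2) \<noteq> []" by (rule bits_ne)
      moreover have "bits b = [a]" using 1(2) True bits_lt2[of a] by simp
      then have "length (bits b) = 1" by simp
      ultimately show ?thesis by simp
    qed
  next
    case False
    show ?thesis
    proof (cases "b < 2")
      case True
      then have "length (bits a) = length (bits (a div 2)) + 1" using False by (simp add: bits_ge2)
      moreover have "bits (a div 2) \<noteq> []" by (rule bits_ne)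
      ultimately show ?thesis using True 1(2) by (simp add: bits_lt2)
    next
      case bF: False
      then have e: "bits (a div 2) @ [a mod 2] = bits (b div 2) @ [b mod 2]" using False 1(2) by (simp add: bits_ge2)
      then have "a div 2 = b div 2" using 1(1) False by auto
      moreover have "a mod 2 = b mod 2" using e by simp
      ultimately show ?thesis by (metis div_mult_mod_eq)
    qed
  qed
qed

lemma length_join: "xs \<noteq> [] \<Longrightarrow> length (join s xs) = sum_list (map length xs) + length s * (length xs - 1)"
  by (induction s xs rule: join.induct) (auto simp: algebra_simps)

lemma join_ne: "xs \<noteq> [] \<Longrightarrow> hd xs \<noteq> [] \<Longrightarrow> join s xs \<noteq> []"
  by (induction s xs rule: join.induct) auto

lemma append_sep_eq:
  "c \<notin> set x \<Longrightarrow> c \<notin> set y \<Longrightarrow> x @ c # R1 = y @ c # R2 \<Longrightarrow> x = y \<and> R1 = R2"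
proof (induction x arbitrary: y)
  case Nil then show ?case by (cases y) auto
next
  case (Cons a x) then show ?case by (cases y) auto
qed

lemma list_cases012: "(ys = [] \<Longrightarrow> P) \<Longrightarrow> (\<And>y. ys = [y] \<Longrightarrow> P) \<Longrightarrow> (\<And>y y' r. ys = y # y' # r \<Longrightarrow> P) \<Longrightarrow> P"
  by (metis remdups_adj.cases)

lemma join_inj:
  "\<forall>x\<in>set xs \<union> set ys. x \<noteq> [] \<and> c \<notin> set x \<Longrightarrow> join [c] xs = join [c] ys \<Longrightarrow> xs = ys"
proof (induction xs arbitrary: ys rule: induct_list012)
  case 1
  then show ?case by (cases ys rule: list_cases012) auto
next
  case (2 x)
  show ?case
  proof (cases ys rule: list_cases012)
    case 1 then show ?thesis using 2 by auto
  next
    case (2 y) then show ?thesis using "2.prems" by auto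
  next
    case (3 y y' r)
    then have "x = y @ c # join [c] (y' # r)" using "2.prems" by simp
    then have "c \<in> set x" by simp
    then show ?thesis using "2.prems" by auto
  qed
next
  case (3 x x' r)
  show ?case
  proof (cases ys rule: list_cases012)
    case 1 then show ?thesis using "3.prems" by auto
  next
    case (2 y)
    then have "y = x @ c # join [c] (x' # r)" using "3.prems" by simp
    then have "c \<in> set y" by simp
    then show ?thesis using "3.prems" 2 by auto
  next
    case (3 y y' r')
    then have "x @ c # join [c] (x' # r) = y @ c # join [c] (y' # r')" using "3.prems" by simp
    then have "x = y \<and> join [c] (x' # r) = join [c] (y' # r')"
      using "3.prems" 3 by (intro append_sep_eq) auto
    moreover have "x' # r = y' # r'"
      using calculation "3.IH"(2)[of "y' # r'"] "3.prems" 3 by auto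
    ultimately show ?thesis using 3 by simp
  qed
qed

lemma concat_inj:
  "\<forall>r\<in>set A \<union> set B. length r = k \<Longrightarrow> length A = length B \<Longrightarrow> concat A = concat B \<Longrightarrow> A = B"
proof (induction A arbitrary: B)
  case Nil then show ?case by simp
next
  case (Cons a A)
  then obtain b B' where B: "B = b # B'" by (cases B) auto
  then have "a @ concat A = b @ concat B'" using Cons.prems by simp
  moreover have "length a = length b" using Cons.prems B by auto
  ultimately have "a = b" "concat A = concat B'" by auto
  then show ?case using Cons B by auto
qed

lemma valid_concat: "valid_mat k A \<Longrightarrow> length (concat A) = k * k"
proof -
  assume v: "valid_mat k A"
  have "length (concat A) = sum_list (map length A)" by (simp add: length_concat)
  also have "map length A = replicate k k" using v unfolding valid_mat_def
    by (simp add: map_replicate_const[symmetric] list_eq_iff_nth_eq)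
  finally show ?thesis by (simp add: sum_list_replicate)
qed

lemma set_enc: "valid_mat k A \<Longrightarrow> set (encode_mat A) \<subseteq> {1,2,3}"
proof -
  assume v: "valid_mat k A"
  have "\<forall>x\<in>set (map (\<lambda>a. map Suc (bits a)) (concat A)). set x \<subseteq> {1,2}"
  proof
    fix x assume "x \<in> set (map (\<lambda>a. map Suc (bits a)) (concat A))"
    then obtain a where a: "a \<in> set (concat A)" "x = map Suc (bits a)" by auto
    have "a \<ge> 1" using a(1) v by (auto simp: valid_mat_def)
    then show "set x \<subseteq> {1,2}" using set_bits'[of a] a(2) by auto
  qed
  then show ?thesis unfolding encode_mat_def using set_join[of "[3]" "map (\<lambda>a. map Suc (bits a)) (concat A)"] by fastforce
qed

lemma enc_ne: "valid_mat k A \<Longrightarrow> k \<ge> 1 \<Longrightarrow> encode_mat A \<noteq> []"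
proof -
  assume v: "valid_mat k A" "k \<ge> 1"
  then have "concat A \<noteq> []" using valid_concat[OF v(1)] by (metis le_0_eq length_0_conv mult_is_0 not_one_le_zero)
  then show ?thesis unfolding encode_mat_def by (intro join_ne) (auto simp: bits_ne hd_map)
qed

lemma enc_inj: "valid_mat k A \<Longrightarrow> valid_mat k B \<Longrightarrow> encode_mat A = encode_mat B \<Longrightarrow> A = B"
proof -
  assume vA: "valid_mat k A" and vB: "valid_mat k B" and e: "encode_mat A = encode_mat B"
  let ?f = "\<lambda>a. map Suc (bits a)"
  have "\<forall>x\<in>set (map ?f (concat A)) \<union> set (map ?f (concat B)). x \<noteq> [] \<and> 3 \<notin> set x"
  proof
    fix x assume "x \<in> set (map ?f (concat A)) \<union> set (map ?f (concat B))"
    then obtain a where a: "a \<in> set (concat A) \<union> set (concat B)" "x = ?f a" by auto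
    have "a \<ge> 1" using a(1) vA vB by (auto simp: valid_mat_def)
    then show "x \<noteq> [] \<and> 3 \<notin> set x" using set_bits'[of a] a(2) bits_ne[of a] by auto
  qed
  then have m: "map ?f (concat A) = map ?f (concat B)" using e unfolding encode_mat_def by (rule join_inj)
  have "inj ?f" by (rule injI) (auto intro: bits_inj simp: inj_map_eq_map[OF inj_Suc])
  then have "concat A = concat B" using m by (simp add: inj_map_eq_map)
  moreover have "\<forall>r\<in>set A \<union> set B. length r = k" using vA vB by (auto simp: valid_mat_def)
  moreover have "length A = length B" using vA vB by (simp add: valid_mat_def)
  ultimately show "A = B" by (intro concat_inj) auto
qed

lemma sum_list_concat': "sum_list (concat xss) = sum_list (map sum_list xss)"
  by (induction xss) auto

lemma sum_rows: "valid_mat k A \<Longrightarrow> (\<Sum>i<k. \<Sum>j<k. f (A ! i ! j)) = sum_list (map f (concat A))"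
proof -
  assume v: "valid_mat k A"
  have "sum_list (map f (concat A)) = sum_list (map (\<lambda>r. sum_list (map f r)) A)"
    by (simp add: map_concat sum_list_concat' comp_def)
  also have "\<dots> = (\<Sum>i<length A. sum_list (map f (A ! i)))"
    by (simp add: sum_list_sum_nth atLeast0LessThan)
  also have "\<dots> = (\<Sum>i<k. \<Sum>j<k. f (A ! i ! j))"
  proof (rule sum.cong)
    show "{..<length A} = {..<k}" using v by (simp add: valid_mat_def)
  next
    fix i assume "i \<in> {..<k}"
    then have "length (A ! i) = k" using v by (auto simp: valid_mat_def)
    then show "sum_list (map f (A ! i)) = (\<Sum>j<k. f (A ! i ! j))"
      by (simp add: sum_list_sum_nth atLeast0LessThan)
  qed
  finally show ?thesis by simp
qed

lemma length_enc: "valid_mat k A \<Longrightarrow> k \<ge> 1 \<Longrightarrow> length (encode_mat A) = size2_mat k A"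
proof -
  assume v: "valid_mat k A" and k: "k \<ge> 1"
  have cA: "concat A \<noteq> []" using valid_concat[OF v] k by (metis le_0_eq length_0_conv mult_is_0 not_one_le_zero)
  have "length (encode_mat A) = sum_list (map length (map (\<lambda>a. map Suc (bits a)) (concat A))) + (length (concat A) - 1)"
    unfolding encode_mat_def using cA by (simp add: length_join)
  also have "sum_list (map length (map (\<lambda>a. map Suc (bits a)) (concat A))) = sum_list (map size2 (concat A))"
  proof -
    have "map (\<lambda>a. length (map Suc (bits a))) (concat A) = map size2 (concat A)"
      by (rule map_cong) (use v in \<open>auto simp: valid_mat_def length_bits\<close>)
    then show ?thesis by (simp only: map_map comp_def)
  qed
  moreover have "k * k \<ge> 1" using k by simp
  ultimately show ?thesis using v by (simp add: size2_mat_def sum_rows valid_concat power2_eq_square)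
qed

lemma enc_inst: "encode_inst (Ws, C) = join [4] (map encode_mat Ws @ [encode_mat C])"
  by (simp add: encode_inst_def)

lemma length_enc_inst:
  assumes "k \<ge> 1" "(Ws, C) \<in> Uall k"
  shows "length (encode_inst (Ws, C)) = size2_inst k (Ws, C)"
proof -
  have v: "\<forall>W\<in>set Ws. valid_mat k W" "valid_mat k C" using assms(2) by (auto simp: Uall_def)
  have e1: "length (encode_inst (Ws, C)) = sum_list (map length (map encode_mat Ws @ [encode_mat C])) + length Ws"
    by (simp add: enc_inst length_join)
  have e2: "map (\<lambda>W. length (encode_mat W)) Ws = map (size2_mat k) Ws"
    by (rule map_cong) (use v assms(1) in \<open>auto simp: length_enc\<close>)
  show ?thesis using e1 e2 v assms(1) by (simp add: size2_inst_def length_enc comp_def)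
qed

lemma tm_inst:
  assumes k: "k \<ge> 1" and I: "(Ws, C) \<in> Uall k"
  shows "tm_state_after TMm (5 * (size2_inst k (Ws, C) + 1)^2) (encode_inst (Ws, C)) = (if C \<in> set Ws then 1 else 3)"
proof -
  have v: "\<forall>W\<in>set Ws. valid_mat k W" "valid_mat k C" using I by (auto simp: Uall_def)
  let ?ws = "map encode_mat Ws" and ?c = "encode_mat C"
  have ws: "\<forall>w\<in>set ?ws. w \<noteq> [] \<and> set w \<subseteq> {1,2,3}"
  proof
    fix w assume "w \<in> set ?ws"
    then obtain W where "W \<in> set Ws" "w = encode_mat W" by auto
    then show "w \<noteq> [] \<and> set w \<subseteq> {1,2,3}" using v k enc_ne[of k W] set_enc[of k W] by auto
  qed
  have c: "?c \<noteq> []" "set ?c \<subseteq> {1,2,3}" using v k enc_ne[of k C] set_enc[of k C] by auto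
  obtain t where t: "t \<le> 5 * (length (join [4] (?ws @ [?c])) + 1)^2"
    "fst (run t (0, [], join [4] (?ws @ [?c]))) = (if ?c \<in> set ?ws then 1 else 3)"
    using tm_strings[OF ws c] by blast
  have len: "length (join [4] (?ws @ [?c])) = size2_inst k (Ws, C)"
    using length_enc_inst[OF k I] by (simp add: enc_inst)
  have cin: "?c \<in> set ?ws \<longleftrightarrow> C \<in> set Ws"
  proof
    assume "?c \<in> set ?ws"
    then obtain W where "W \<in> set Ws" "encode_mat W = ?c" by auto
    then have "W = C" using enc_inj[of k W C] v by auto
    then show "C \<in> set Ws" using \<open>W \<in> set Ws\<close> by simp
  qed auto
  have "run (5 * (size2_inst k (Ws, C) + 1)^2) (0, [], join [4] (?ws @ [?c])) = run t (0, [], join [4] (?ws @ [?c]))"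
    using t len by (intro run_halt_mono) auto
  then show ?thesis using t(2) cin unfolding tm_state_after_def by (simp add: enc_inst)
qed




definition fib :: "'a set \<Rightarrow> ('a \<Rightarrow> nat) \<Rightarrow> nat \<Rightarrow> 'a set" where
  "fib S \<omega> j = {x\<in>S. \<omega> x = j}"

definition Ln :: "'a set \<Rightarrow> ('a \<Rightarrow> nat) \<Rightarrow> nat \<Rightarrow> nat \<Rightarrow> 'a list set" where
  "Ln S \<omega> n j = {xs. length xs = n \<and> set xs \<subseteq> S \<and> sum_list (map \<omega> xs) = j}"

definition LS :: "'a set \<Rightarrow> ('a \<Rightarrow> nat) \<Rightarrow> nat \<Rightarrow> 'a list set" where
  "LS S \<omega> t = {xs. set xs \<subseteq> S \<and> sum_list (map \<omega> xs) = t}"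

definition consset :: "'a set \<Rightarrow> ('a \<Rightarrow> nat) \<Rightarrow> (nat \<Rightarrow> 'a list set) \<Rightarrow> nat \<Rightarrow> 'a list set" where
  "consset S \<omega> F j = (\<lambda>(x, xs). x # xs) ` (SIGMA x:{x\<in>S. \<omega> x \<le> j}. F (j - \<omega> x))"

lemma fin_le: "\<forall>i. finite (fib S \<omega> i) \<Longrightarrow> finite {x\<in>S. \<omega> x \<le> j}"
proof -
  assume f: "\<forall>i. finite (fib S \<omega> i)"
  have "{x\<in>S. \<omega> x \<le> j} = (\<Union>i\<in>{..j}. fib S \<omega> i)" by (auto simp: fib_def)
  then show ?thesis using f by simp
qed

lemma consset_finite: "\<forall>i. finite (fib S \<omega> i) \<Longrightarrow> \<forall>i. finite (F i) \<Longrightarrow> finite (consset S \<omega> F j)"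
  unfolding consset_def by (intro finite_imageI finite_SigmaI fin_le) auto

lemma consset_card:
  assumes f: "\<forall>i. finite (fib S \<omega> i)" and F: "\<forall>i. finite (F i)"
  shows "card (consset S \<omega> F j) = (\<Sum>i\<le>j. card (fib S \<omega> i) * card (F (j - i)))"
proof -
  have inj: "inj_on (\<lambda>(x, xs). x # xs) (SIGMA x:{x\<in>S. \<omega> x \<le> j}. F (j - \<omega> x))"
    by (auto simp: inj_on_def)
  have "card (consset S \<omega> F j) = card (SIGMA x:{x\<in>S. \<omega> x \<le> j}. F (j - \<omega> x))"
    unfolding consset_def by (rule card_image[OF inj])
  also have "\<dots> = (\<Sum>x\<in>{x\<in>S. \<omega> x \<le> j}. card (F (j - \<omega> x)))"
    using fin_le[OF f] F by (simp add: card_SigmaI)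
  also have "{x\<in>S. \<omega> x \<le> j} = (\<Union>i\<in>{..j}. fib S \<omega> i)" by (auto simp: fib_def)
  also have "(\<Sum>x\<in>(\<Union>i\<in>{..j}. fib S \<omega> i). card (F (j - \<omega> x))) = (\<Sum>i\<le>j. \<Sum>x\<in>fib S \<omega> i. card (F (j - \<omega> x)))"
    by (rule sum.UNION_disjoint) (use f in \<open>auto simp: fib_def\<close>)
  also have "\<dots> = (\<Sum>i\<le>j. card (fib S \<omega> i) * card (F (j - i)))"
    by (rule sum.cong) (auto simp: fib_def)
  finally show ?thesis .
qed

lemma Ln_Suc: "Ln S \<omega> (Suc n) j = consset S \<omega> (Ln S \<omega> n) j"
proof (rule set_eqI)
  fix ys
  show "ys \<in> Ln S \<omega> (Suc n) j \<longleftrightarrow> ys \<in> consset S \<omega> (Ln S \<omega> n) j"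
  proof
    assume "ys \<in> Ln S \<omega> (Suc n) j"
    then obtain x xs where "ys = x # xs" "length xs = n" "x \<in> S" "set xs \<subseteq> S" "\<omega> x + sum_list (map \<omega> xs) = j"
      unfolding Ln_def by (cases ys) auto
    then show "ys \<in> consset S \<omega> (Ln S \<omega> n) j"
      unfolding consset_def Ln_def by (auto intro!: image_eqI[of _ _ "(x, xs)"])
  next
    assume "ys \<in> consset S \<omega> (Ln S \<omega> n) j"
    then show "ys \<in> Ln S \<omega> (Suc n) j" unfolding consset_def Ln_def by auto
  qed
qed

lemma Ln_0: "Ln S \<omega> 0 j = (if j = 0 then {[]} else {})"
  by (auto simp: Ln_def)

lemma Ln_finite: "\<forall>i. finite (fib S \<omega> i) \<Longrightarrow> finite (Ln S \<omega> n j)"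
proof (induction n arbitrary: j)
  case 0 then show ?case by (simp add: Ln_0)
next
  case (Suc n) then show ?case by (simp add: Ln_Suc consset_finite)
qed

lemma Ln_card_Suc: "\<forall>i. finite (fib S \<omega> i) \<Longrightarrow>
  card (Ln S \<omega> (Suc n) j) = (\<Sum>i\<le>j. card (fib S \<omega> i) * card (Ln S \<omega> n (j - i)))"
  by (simp add: Ln_Suc consset_card Ln_finite)

lemma Ln_gf:
  fixes y G :: real
  assumes f: "\<forall>i. finite (fib S \<omega> i)" and y: "y \<ge> 0"
    and G: "(\<lambda>j. real (card (fib S \<omega> j)) * y ^ j) sums G"
  shows "(\<lambda>j. real (card (Ln S \<omega> n j)) * y ^ j) sums (G ^ n)"
proof (induction n)
  case 0
  have "(\<lambda>j. real (card (Ln S \<omega> 0 j)) * y ^ j) = (\<lambda>j. if j = 0 then 1 else 0)"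
    by (auto simp: Ln_0)
  then show ?case using sums_single[of 0 "\<lambda>_. 1::real"] by simp
next
  case (Suc n)
  let ?a = "\<lambda>j. real (card (fib S \<omega> j)) * y ^ j"
  let ?b = "\<lambda>j. real (card (Ln S \<omega> n j)) * y ^ j"
  have sa: "summable (\<lambda>j. norm (?a j))" using G y by (simp add: sums_iff)
  have sb: "summable (\<lambda>j. norm (?b j))" using Suc y by (simp add: sums_iff)
  have "(\<lambda>j. \<Sum>i\<le>j. ?a i * ?b (j - i)) sums (suminf ?a * suminf ?b)"
    by (rule Cauchy_product_sums[OF sa sb])
  moreover have "suminf ?a = G" "suminf ?b = G ^ n" using G Suc by (auto simp: sums_iff)
  moreover have "(\<lambda>j. \<Sum>i\<le>j. ?a i * ?b (j - i)) = (\<lambda>j. real (card (Ln S \<omega> (Suc n) j)) * y ^ j)"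
  proof
    fix j
    have "(\<Sum>i\<le>j. ?a i * ?b (j - i)) = (\<Sum>i\<le>j. real (card (fib S \<omega> i) * card (Ln S \<omega> n (j - i))) * y ^ j)"
    proof (rule sum.cong)
      fix i assume "i \<in> {..j}"
      then have "y ^ i * y ^ (j - i) = y ^ j" by (simp add: power_add[symmetric])
      then show "?a i * ?b (j - i) = real (card (fib S \<omega> i) * card (Ln S \<omega> n (j - i))) * y ^ j"
        by (simp add: algebra_simps)
    qed simp
    also have "\<dots> = real (card (Ln S \<omega> (Suc n) j)) * y ^ j"
      by (simp add: Ln_card_Suc[OF f] sum_distrib_right)
    finally show "(\<Sum>i\<le>j. ?a i * ?b (j - i)) = real (card (Ln S \<omega> (Suc n) j)) * y ^ j" .
  qed
  ultimately show ?case by simp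
qed

lemma LS_Suc: "t \<ge> 1 \<Longrightarrow> LS S \<omega> t = consset S \<omega> (LS S \<omega>) t"
proof (rule set_eqI)
  fix ys assume t: "t \<ge> 1"
  show "ys \<in> LS S \<omega> t \<longleftrightarrow> ys \<in> consset S \<omega> (LS S \<omega>) t"
  proof
    assume a: "ys \<in> LS S \<omega> t"
    then have "ys \<noteq> []" using t by (auto simp: LS_def)
    then obtain x xs where "ys = x # xs" "x \<in> S" "set xs \<subseteq> S" "\<omega> x + sum_list (map \<omega> xs) = t"
      using a unfolding LS_def by (cases ys) auto
    then show "ys \<in> consset S \<omega> (LS S \<omega>) t"
      unfolding consset_def LS_def by (auto intro!: image_eqI[of _ _ "(x, xs)"])
  next
    assume "ys \<in> consset S \<omega> (LS S \<omega>) t"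
    then show "ys \<in> LS S \<omega> t" unfolding consset_def LS_def by auto
  qed
qed

lemma LS_0: "\<forall>x\<in>S. \<omega> x \<ge> 1 \<Longrightarrow> LS S \<omega> 0 = {[]}"
proof -
  assume p: "\<forall>x\<in>S. \<omega> x \<ge> 1"
  have "xs = []" if "set xs \<subseteq> S" "sum_list (map \<omega> xs) = 0" for xs
  proof (cases xs)
    case (Cons x r)
    then have "\<omega> x \<ge> 1" using that p by auto
    then show ?thesis using that Cons by simp
  qed simp
  then show ?thesis by (auto simp: LS_def)
qed

lemma LS_finite:
  assumes p: "\<forall>x\<in>S. \<omega> x \<ge> 1" and f: "\<forall>i. finite (fib S \<omega> i)"
  shows "finite (LS S \<omega> t)"
proof -
  have "LS S \<omega> t \<subseteq> {xs. set xs \<subseteq> {x\<in>S. \<omega> x \<le> t} \<and> length xs \<le> t}"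
  proof
    fix xs assume a: "xs \<in> LS S \<omega> t"
    have le: "\<omega> x \<le> t" if "x \<in> set xs" for x
      using a that member_le_sum_list[of "\<omega> x" "map \<omega> xs"] by (auto simp: LS_def)
    have "length xs \<le> sum_list (map \<omega> xs)"
    proof -
      have "length xs = sum_list (map (\<lambda>_. 1::nat) xs)" by (simp add: sum_list_triv)
      also have "\<dots> \<le> sum_list (map \<omega> xs)" using a p by (intro sum_list_mono) (auto simp: LS_def)
      finally show ?thesis .
    qed
    then show "xs \<in> {xs. set xs \<subseteq> {x\<in>S. \<omega> x \<le> t} \<and> length xs \<le> t}"
      using a le by (auto simp: LS_def)
  qed
  moreover have "finite {xs. set xs \<subseteq> {x\<in>S. \<omega> x \<le> t} \<and> length xs \<le> t}"
    by (rule finite_lists_length_le) (rule fin_le[OF f])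
  ultimately show ?thesis by (rule finite_subset)
qed

lemma LS_card:
  assumes p: "\<forall>x\<in>S. \<omega> x \<ge> 1" and f: "\<forall>i. finite (fib S \<omega> i)" and t: "t \<ge> 1"
  shows "card (LS S \<omega> t) = (\<Sum>i\<le>t. card (fib S \<omega> i) * card (LS S \<omega> (t - i)))"
proof -
  have "card (LS S \<omega> t) = card (consset S \<omega> (LS S \<omega>) t)" using LS_Suc[OF t, of S \<omega>] by simp
  also have "\<dots> = (\<Sum>i\<le>t. card (fib S \<omega> i) * card (LS S \<omega> (t - i)))"
    by (rule consset_card[OF f]) (use LS_finite[OF p f] in blast)
  finally show ?thesis .
qed

lemma fib0: "\<forall>x\<in>S. \<omega> x \<ge> 1 \<Longrightarrow> fib S \<omega> 0 = {}"
  by (auto simp: fib_def)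

definition Pos :: "nat set" where "Pos = {a. 1 \<le> a}"
definition eps :: "nat \<Rightarrow> nat" where "eps a = size2 a + 1"
definition Rows :: "nat \<Rightarrow> nat list set" where "Rows k = {r. length r = k \<and> set r \<subseteq> Pos}"
definition rho :: "nat list \<Rightarrow> nat" where "rho r = sum_list (map eps r)"
definition Mats :: "nat \<Rightarrow> mat set" where "Mats k = {M. valid_mat k M}"
definition sig :: "mat \<Rightarrow> nat" where "sig M = sum_list (map rho M)"

lemma card_fib_ent: "card (fib Pos eps w) = (if w \<ge> 2 then 2 ^ (w - 2) else 0)"
proof (cases "w = 0")
  case True
  then have "fib Pos eps w = {}" by (auto simp: fib_def eps_def)
  then show ?thesis using True by simp
next
  case False
  then have "fib Pos eps w = {a. a \<ge> 1 \<and> size2 a = w - 1}" by (auto simp: fib_def eps_def Pos_def)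
  moreover have "card {a. a \<ge> 1 \<and> size2 a = w - 1} = (if w - 1 \<ge> 1 then 2 ^ (w - 1 - 1) else 0)"
    by (rule card_size2)
  moreover have "(w - 1 \<ge> 1) = (w \<ge> 2)" "w - 1 - 1 = w - 2" by auto
  ultimately show ?thesis by simp
qed

lemma fin_fib_ent: "finite (fib Pos eps w)"
proof -
  have "fib Pos eps w \<subseteq> {..<2 ^ w}"
  proof
    fix a assume "a \<in> fib Pos eps w"
    then have "a \<ge> 1" "size2 a + 1 = w" by (auto simp: fib_def eps_def Pos_def)
    then have l1: "a < 2 ^ size2 a" and l2: "(2::nat) ^ size2 a \<le> 2 ^ w"
      using size2_bounds[of a] by (auto intro: power_increasing)
    show "a \<in> {..<2 ^ w}" using less_le_trans[OF l1 l2] by simp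
  qed
  then show ?thesis by (rule finite_subset) simp
qed

lemma ent_gf:
  fixes y :: real
  assumes y: "0 \<le> y" "y < 1/2"
  shows "(\<lambda>w. real (card (fib Pos eps w)) * y ^ w) sums (y^2 / (1 - 2*y))"
proof -
  define f where "f = (\<lambda>w. real (card (fib Pos eps w)) * y ^ w)"
  have f2: "f (Suc (Suc n)) = y^2 * (2*y)^n" for n
  proof -
    have "card (fib Pos eps (Suc (Suc n))) = 2 ^ n" by (simp add: card_fib_ent)
    then show ?thesis by (simp add: f_def power_mult_distrib power2_eq_square)
  qed
  have f0: "f 0 = 0" and f1: "f 1 = 0" by (simp_all add: f_def card_fib_ent)
  have "norm (2*y) < 1" using y by simp
  then have "(\<lambda>n. (2*y)^n) sums (1 / (1 - 2*y))" by (rule geometric_sums)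
  then have "(\<lambda>n. y^2 * (2*y)^n) sums (y^2 * (1 / (1 - 2*y)))" by (rule sums_mult)
  then have "(\<lambda>n. f (Suc (Suc n))) sums (y^2 / (1 - 2*y))" by (simp add: f2)
  then have "(\<lambda>n. f (Suc n)) sums (y^2 / (1 - 2*y) + f (Suc 0))"
    using sums_Suc_iff[of "\<lambda>n. f (Suc n)" "y^2 / (1 - 2*y)"] by blast
  then have "(\<lambda>n. f (Suc n)) sums (y^2 / (1 - 2*y))" using f1 by simp
  then have "f sums (y^2 / (1 - 2*y) + f 0)" using sums_Suc_iff[of f "y^2 / (1 - 2*y)"] by blast
  then show ?thesis using f0 by (simp add: f_def)
qed

lemma fib_rows: "fib (Rows k) rho j = Ln Pos eps k j"
  by (auto simp: fib_def Rows_def rho_def Ln_def)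

lemma fib_mats: "fib (Mats k) sig j = Ln (Rows k) rho k j"
  by (auto simp: fib_def Rows_def rho_def Ln_def Mats_def sig_def valid_mat_def Pos_def)

lemma fin_fib_rows: "finite (fib (Rows k) rho j)"
  unfolding fib_rows by (rule Ln_finite) (simp add: fin_fib_ent)

lemma fin_fib_mats: "finite (fib (Mats k) sig j)"
  unfolding fib_mats by (rule Ln_finite) (simp add: fin_fib_rows)

lemma mats_gf:
  fixes y :: real
  assumes y: "0 \<le> y" "y < 1/2"
  shows "(\<lambda>j. real (card (fib (Mats k) sig j)) * y ^ j) sums ((y^2 / (1 - 2*y)) ^ (k * k))"
proof -
  have r: "(\<lambda>j. real (card (fib (Rows k) rho j)) * y ^ j) sums ((y^2 / (1 - 2*y)) ^ k)"
    unfolding fib_rows by (rule Ln_gf) (use y ent_gf[OF y] fin_fib_ent in auto)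
  have "(\<lambda>j. real (card (fib (Mats k) sig j)) * y ^ j) sums (((y^2 / (1 - 2*y)) ^ k) ^ k)"
    unfolding fib_mats by (rule Ln_gf) (use y r fin_fib_rows in auto)
  then show ?thesis by (simp add: power_mult)
qed

lemma sum_list_Suc: "sum_list (map (\<lambda>a. Suc (g a)) xs) = sum_list (map g xs) + length (xs :: 'a list)"
  by (induction xs) auto

lemma sig_size2: "valid_mat k M \<Longrightarrow> k \<ge> 1 \<Longrightarrow> sig M = size2_mat k M + 1"
proof -
  assume v: "valid_mat k M" and k: "k \<ge> 1"
  have "sig M = sum_list (map eps (concat M))"
    by (simp add: sig_def rho_def[abs_def] map_concat sum_list_concat' comp_def)
  also have "\<dots> = sum_list (map size2 (concat M)) + length (concat M)"
    by (simp add: eps_def[abs_def] sum_list_Suc)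
  also have "\<dots> = sum_list (map size2 (concat M)) + k * k" using valid_concat[OF v] by simp
  finally show ?thesis using v k by (simp add: size2_mat_def sum_rows power2_eq_square)
qed

lemma sig_ge1: "M \<in> Mats k \<Longrightarrow> k \<ge> 1 \<Longrightarrow> sig M \<ge> 1"
  by (simp add: Mats_def sig_size2)

lemma exists_sig: "k \<ge> 1 \<Longrightarrow> t \<ge> 2 * (k * k) \<Longrightarrow> \<exists>M\<in>Mats k. sig M = t"
proof -
  assume k: "k \<ge> 1" and t: "t \<ge> 2 * (k * k)"
  define s where "s = t + 1 - 2 * (k * k)"
  define a where "a = (2::nat) ^ (s - 1)"
  have s1: "s \<ge> 1" using t by (simp add: s_def)
  have sa: "size2 a = s" unfolding a_def using s1 by (intro size2_eqI) auto
  have a1: "a \<ge> 1" by (simp add: a_def)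
  define M where "M = (a # replicate (k - 1) 1) # replicate (k - 1) (replicate k 1)"
  have v: "valid_mat k M" using k a1 by (auto simp: M_def valid_mat_def)
  have e1: "size2 1 = 1" "size2 (Suc 0) = 1" by (simp_all add: size2_def)
  have "sig M = (size2 a + 1) + (k - 1) * 2 + (k - 1) * (k * 2)"
    by (simp add: M_def sig_def rho_def eps_def e1 sum_list_replicate)
  also have "\<dots> = t"
  proof -
    obtain j where j: "k = Suc j" using k by (cases k) auto
    have h: "(k - 1) * 2 + (k - 1) * (k * 2) + 2 = 2 * (k * k)" unfolding j by (simp add: algebra_simps)
    show ?thesis using h sa t unfolding s_def by linarith
  qed
  finally show ?thesis using v by (auto simp: Mats_def)
qed




lemma geo_tail:
  fixes x :: real
  assumes "0 \<le> x" "x < 1"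
  shows "(\<Sum>i\<in>{J<..n}. x ^ i) \<le> x ^ Suc J / (1 - x)"
proof (cases "n < Suc J")
  case True
  then have "{J<..n} = {}" by auto
  then show ?thesis using assms by simp
next
  case False
  have "(\<Sum>i\<in>{J<..n}. x ^ i) = (\<Sum>i=Suc J..n. x ^ i)" by (simp add: atLeastSucAtMost_greaterThanAtMost)
  also have "\<dots> = (x ^ Suc J - x ^ Suc n) / (1 - x)" using False assms by (simp add: sum_gp)
  also have "\<dots> \<le> x ^ Suc J / (1 - x)" using assms by (intro divide_right_mono) auto
  finally show ?thesis .
qed

lemma ren_bound:
  fixes w u :: "nat \<Rightarrow> real"
  assumes w0: "w 0 = 0" and wn: "\<forall>j. 0 \<le> w j" and u0: "u 0 = 1"
    and ur: "\<forall>t\<ge>1. u t = (\<Sum>i\<le>t. w i * u (t - i))"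
    and S: "\<forall>n. (\<Sum>i\<le>n. w i) \<le> 1"
  shows "0 \<le> u t \<and> u t \<le> 1"
proof (induction t rule: less_induct)
  case (less t)
  show ?case
  proof (cases "t = 0")
    case True then show ?thesis using u0 by simp
  next
    case False
    have b: "0 \<le> w i * u (t - i) \<and> w i * u (t - i) \<le> w i" if "i \<le> t" for i
    proof (cases "i = 0")
      case True then show ?thesis using w0 by simp
    next
      case False
      then have "t - i < t" using \<open>t \<noteq> 0\<close> that by simp
      then have "0 \<le> u (t - i) \<and> u (t - i) \<le> 1" by (rule less.IH)
      then show ?thesis using wn by (simp add: mult_left_le)
    qed
    have "u t = (\<Sum>i\<le>t. w i * u (t - i))" using ur False by simp
    moreover have "0 \<le> (\<Sum>i\<le>t. w i * u (t - i))" using b by (intro sum_nonneg) auto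
    moreover have "(\<Sum>i\<le>t. w i * u (t - i)) \<le> (\<Sum>i\<le>t. w i)" using b by (intro sum_mono) auto
    ultimately show ?thesis using S[rule_format, of t] by linarith
  qed
qed

lemma ren_decay:
  fixes w u :: "nat \<Rightarrow> real"
  assumes w0: "w 0 = 0" and wn: "\<forall>j. 0 \<le> w j" and u0: "u 0 = 1"
    and ur: "\<forall>t\<ge>1. u t = (\<Sum>i\<le>t. w i * u (t - i))"
    and wb: "\<forall>j. w j \<le> B * \<theta> ^ j" and th: "0 \<le> \<theta>" "\<theta> < 1"
    and S: "\<forall>n. (\<Sum>i\<le>n. w i) \<le> S" and S1: "S < 1"
  shows "\<exists>\<rho>. 0 < \<rho> \<and> \<rho> < 1 \<and> (\<forall>t. u t \<le> \<rho> ^ t)"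
proof -
  have B0: "0 \<le> B" using wb wn[rule_format, of 0] by (metis mult.right_neutral order_trans power_0)
  have S0: "0 \<le> S" using S[rule_format, of 0] w0 by simp
  define \<beta> where "\<beta> = (1 + \<theta>) / 2"
  have \<beta>: "\<theta> < \<beta>" "\<beta> < 1" "0 < \<beta>" using th by (auto simp: \<beta>_def)
  define \<beta>' where "\<beta>' = \<theta> / \<beta>"
  have \<beta>': "0 \<le> \<beta>'" "\<beta>' < 1" using \<beta> th by (auto simp: \<beta>'_def)
  obtain n0 where n0: "\<beta>' ^ n0 < (1 - S) / 2 * (1 - \<beta>') / (B + 1)"
    using real_arch_pow_inv[of "(1 - S) / 2 * (1 - \<beta>') / (B + 1)" \<beta>'] S1 \<beta>' B0 by auto
  define J where "J = max n0 1"
  have J: "J \<ge> 1" "J \<ge> n0" by (auto simp: J_def)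
  have bJ: "B * \<beta>' ^ Suc J / (1 - \<beta>') \<le> (1 - S) / 2"
  proof -
    have "\<beta>' ^ Suc J \<le> \<beta>' ^ n0" using \<beta>' J by (intro power_decreasing) auto
    then have "\<beta>' ^ Suc J < (1 - S) / 2 * (1 - \<beta>') / (B + 1)" using n0 by linarith
    then have "(B + 1) * \<beta>' ^ Suc J < (1 - S) / 2 * (1 - \<beta>')" using B0 by (simp add: field_simps)
    moreover have "B * \<beta>' ^ Suc J \<le> (B + 1) * \<beta>' ^ Suc J" using \<beta>' by (intro mult_right_mono) auto
    ultimately have "B * \<beta>' ^ Suc J \<le> (1 - S) / 2 * (1 - \<beta>')" by linarith
    then show ?thesis using \<beta>' by (simp add: field_simps)
  qed
  define \<gamma> where "\<gamma> = 2 * S / (1 + S)"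
  have \<gamma>: "0 \<le> \<gamma>" "\<gamma> < 1" using S0 S1 by (auto simp: \<gamma>_def field_simps)
  define \<rho> where "\<rho> = max \<beta> (root J \<gamma>)"
  have \<rho>: "0 < \<rho>" "\<rho> < 1" "\<beta> \<le> \<rho>" using \<beta> \<gamma> J by (auto simp: \<rho>_def)
  have \<rho>J: "\<gamma> \<le> \<rho> ^ J"
  proof -
    have "root J \<gamma> ^ J \<le> \<rho> ^ J" using \<gamma> by (intro power_mono) (auto simp: \<rho>_def real_root_ge_zero)
    then show ?thesis using J \<gamma> by simp
  qed
  have key: "(\<Sum>i\<le>n. w i * (1 / \<rho>) ^ i) \<le> 1" for n
  proof -
    have split: "{..n} = ({..n} \<inter> {..J}) \<union> {J<..n}" by auto
    have "(\<Sum>i\<le>n. w i * (1 / \<rho>) ^ i) = (\<Sum>i\<in>{..n} \<inter> {..J}. w i * (1 / \<rho>) ^ i) + (\<Sum>i\<in>{J<..n}. w i * (1 / \<rho>) ^ i)"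
      by (subst split, rule sum.union_disjoint) auto
    also have "(\<Sum>i\<in>{..n} \<inter> {..J}. w i * (1 / \<rho>) ^ i) \<le> (1 + S) / 2"
    proof -
      have "(\<Sum>i\<in>{..n} \<inter> {..J}. w i * (1 / \<rho>) ^ i) \<le> (\<Sum>i\<in>{..n} \<inter> {..J}. w i * (1 / \<rho>) ^ J)"
      proof (rule sum_mono)
        fix i assume "i \<in> {..n} \<inter> {..J}"
        then have "(1 / \<rho>) ^ i \<le> (1 / \<rho>) ^ J" using \<rho> by (intro power_increasing) auto
        then show "w i * (1 / \<rho>) ^ i \<le> w i * (1 / \<rho>) ^ J" using wn by (simp add: mult_left_mono)
      qed
      also have "\<dots> = (1 / \<rho>) ^ J * (\<Sum>i\<in>{..min n J}. w i)"
        by (simp add: sum_distrib_right mult.commute min_def)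
      also have "\<dots> \<le> (1 / \<rho>) ^ J * S" using S \<rho> by (intro mult_left_mono) auto
      also have "\<dots> \<le> (1 + S) / 2"
      proof (cases "S = 0")
        case True then show ?thesis by simp
      next
        case False
        then have "0 < \<gamma>" using S0 by (simp add: \<gamma>_def)
        then have "(1 / \<rho>) ^ J \<le> 1 / \<gamma>" using \<rho>J \<rho> by (simp add: power_one_over divide_simps)
        then have "(1 / \<rho>) ^ J * S \<le> (1 / \<gamma>) * S" using S0 by (intro mult_right_mono) auto
        also have "\<dots> = (1 + S) / 2" using False S0 by (simp add: \<gamma>_def field_simps)
        finally show ?thesis .
      qed
      finally show ?thesis .
    qed
    also have "(\<Sum>i\<in>{J<..n}. w i * (1 / \<rho>) ^ i) \<le> (1 - S) / 2"
    proof -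
      have "(\<Sum>i\<in>{J<..n}. w i * (1 / \<rho>) ^ i) \<le> (\<Sum>i\<in>{J<..n}. B * \<beta>' ^ i)"
      proof (rule sum_mono)
        fix i
        have "w i * (1 / \<rho>) ^ i \<le> B * \<theta> ^ i * (1 / \<rho>) ^ i" using wb \<rho> by (intro mult_right_mono) auto
        also have "\<dots> = B * (\<theta> / \<rho>) ^ i" by (simp add: power_divide)
        also have "\<dots> \<le> B * \<beta>' ^ i"
        proof -
          have "\<theta> / \<rho> \<le> \<beta>'" using \<rho> \<beta> th unfolding \<beta>'_def by (intro divide_left_mono) auto
          then have "(\<theta> / \<rho>) ^ i \<le> \<beta>' ^ i" using th \<rho> by (intro power_mono) auto
          then show ?thesis using B0 by (intro mult_left_mono) auto
        qed
        finally show "w i * (1 / \<rho>) ^ i \<le> B * \<beta>' ^ i" .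
      qed
      also have "\<dots> = B * (\<Sum>i\<in>{J<..n}. \<beta>' ^ i)" by (simp add: sum_distrib_left)
      also have "\<dots> \<le> B * (\<beta>' ^ Suc J / (1 - \<beta>'))" using B0 geo_tail[OF \<beta>'] by (intro mult_left_mono) auto
      also have "\<dots> \<le> (1 - S) / 2" using bJ by simp
      finally show ?thesis .
    qed
    finally show ?thesis by (simp add: field_simps)
  qed
  have "u t \<le> \<rho> ^ t" for t
  proof (induction t rule: less_induct)
    case (less t)
    show ?case
    proof (cases "t = 0")
      case True then show ?thesis using u0 by simp
    next
      case False
      have "u t = (\<Sum>i\<le>t. w i * u (t - i))" using ur False by simp
      also have "\<dots> \<le> (\<Sum>i\<le>t. w i * \<rho> ^ (t - i))"
      proof (rule sum_mono)
        fix i assume "i \<in> {..t}"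
        show "w i * u (t - i) \<le> w i * \<rho> ^ (t - i)"
        proof (cases "i = 0")
          case True then show ?thesis using w0 by simp
        next
          case False
          then have "u (t - i) \<le> \<rho> ^ (t - i)" using \<open>t \<noteq> 0\<close> \<open>i \<in> {..t}\<close> by (intro less.IH) auto
          then show ?thesis using wn by (simp add: mult_left_mono)
        qed
      qed
      also have "\<dots> = \<rho> ^ t * (\<Sum>i\<le>t. w i * (1 / \<rho>) ^ i)"
      proof -
        have "w i * \<rho> ^ (t - i) = \<rho> ^ t * (w i * (1 / \<rho>) ^ i)" if "i \<le> t" for i
          using that \<rho> by (simp add: power_diff power_one_over field_simps)
        then have "(\<Sum>i\<le>t. w i * \<rho> ^ (t - i)) = (\<Sum>i\<le>t. \<rho> ^ t * (w i * (1 / \<rho>) ^ i))"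
          by (intro sum.cong) auto
        then show ?thesis by (simp add: sum_distrib_left)
      qed
      also have "\<dots> \<le> \<rho> ^ t * 1" using key \<rho> by (intro mult_left_mono) auto
      finally show ?thesis by simp
    qed
  qed
  then show ?thesis using \<rho> by blast
qed

lemma tail_bound:
  fixes w :: "nat \<Rightarrow> real"
  assumes ws: "w sums 1" and wb: "\<forall>j. w j \<le> B * \<theta> ^ j" and th: "0 \<le> \<theta>" "\<theta> < 1"
  shows "1 - (\<Sum>i\<le>n. w i) \<le> B * \<theta> ^ Suc n / (1 - \<theta>)"
proof -
  have a: "(\<lambda>i. w (i + Suc n)) sums (1 - (\<Sum>i<Suc n. w i))" by (rule sums_split_initial_segment[OF ws])
  have "(\<lambda>i. \<theta> ^ i) sums (1 / (1 - \<theta>))" using th by (intro geometric_sums) auto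
  then have b: "(\<lambda>i. (B * \<theta> ^ Suc n) * \<theta> ^ i) sums ((B * \<theta> ^ Suc n) * (1 / (1 - \<theta>)))" by (rule sums_mult)
  have "1 - (\<Sum>i<Suc n. w i) \<le> (B * \<theta> ^ Suc n) * (1 / (1 - \<theta>))"
  proof (rule sums_le[OF _ a b])
    fix i
    have "w (i + Suc n) \<le> B * \<theta> ^ (i + Suc n)" using wb by blast
    also have "\<theta> ^ (i + Suc n) = \<theta> ^ Suc n * \<theta> ^ i" by (simp add: power_add mult.commute)
    finally show "w (i + Suc n) \<le> B * \<theta> ^ Suc n * \<theta> ^ i" by (simp add: mult.assoc)
  qed
  then show ?thesis by (simp add: lessThan_Suc_atMost)
qed

lemma ren_lower:
  fixes w u :: "nat \<Rightarrow> real"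
  assumes w0: "w 0 = 0" and wn: "\<forall>j. 0 \<le> w j"
    and ur: "\<forall>t\<ge>1. u t = (\<Sum>i\<le>t. w i * u (t - i))"
    and wb: "\<forall>j. w j \<le> B * \<theta> ^ j" and th: "0 \<le> \<theta>" "\<theta> < 1"
    and ws: "w sums 1" and pos: "\<forall>t\<ge>T. 0 < u t" and unn: "\<forall>t. 0 \<le> u t"
  shows "\<exists>c>0. \<forall>t\<ge>T. c \<le> u t"
proof -
  have B0: "0 \<le> B" using wb wn[rule_format, of 0] by (metis mult.right_neutral order_trans power_0)
  define e where "e n = B * \<theta> ^ Suc n / (1 - \<theta>)" for n
  define E where "E n = B * \<theta> ^ (n + 2) / (1 - \<theta>)^2" for n
  have e0: "0 \<le> e n" for n using B0 th by (simp add: e_def)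
  have E0: "0 \<le> E n" for n using B0 th by (simp add: E_def)
  have Emono: "E m \<le> E n" if "n \<le> m" for m n
  proof -
    have "\<theta> ^ (m + 2) \<le> \<theta> ^ (n + 2)" using that th by (intro power_decreasing) auto
    then show ?thesis using B0 th unfolding E_def by (intro divide_right_mono mult_left_mono) auto
  qed
  have Estep: "E (n - 1) - E n = e n" if "n \<ge> 1" for n
  proof -
    have "n \<noteq> 0" using that by simp
    then obtain m where m: "n = Suc m" using not0_implies_Suc by blast
    have "E (n - 1) - E n = (B * \<theta> ^ (m + 2) - B * \<theta> ^ (Suc m + 2)) / (1 - \<theta>)^2"
      unfolding m E_def by (simp only: diff_Suc_1 diff_divide_distrib)
    also have "B * \<theta> ^ (m + 2) - B * \<theta> ^ (Suc m + 2) = B * \<theta> ^ (m + 2) * (1 - \<theta>)"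
    proof -
      have "Suc m + 2 = Suc (m + 2)" by simp
      then have "\<theta> ^ (Suc m + 2) = \<theta> ^ (m + 2) * \<theta>" by (simp only: power_Suc2)
      then show ?thesis by (simp add: algebra_simps)
    qed
    also have "B * \<theta> ^ (m + 2) * (1 - \<theta>) / (1 - \<theta>)^2 = B * \<theta> ^ (m + 2) / (1 - \<theta>)"
    proof -
      have "1 - \<theta> \<noteq> 0" using th by simp
      then have "B * \<theta> ^ (m + 2) * (1 - \<theta>) / ((1 - \<theta>) * (1 - \<theta>)) = B * \<theta> ^ (m + 2) / (1 - \<theta>)"
        by (rule nonzero_mult_divide_mult_cancel_right)
      then show ?thesis by (simp only: power2_eq_square)
    qed
    also have "\<dots> = e n" unfolding m e_def by (simp add: numeral_2_eq_2)
    finally show ?thesis .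
  qed
  have tl: "1 - (\<Sum>i\<le>n. w i) \<le> e n" for n unfolding e_def by (rule tail_bound[OF ws wb th])
  obtain R where R: "E R \<le> 1/2"
  proof -
    obtain n where n: "\<theta> ^ n < (1/2) * (1 - \<theta>)^2 / (B + 1)"
      using real_arch_pow_inv[of "(1/2) * (1 - \<theta>)^2 / (B + 1)" \<theta>] th B0 by auto
    have "\<theta> ^ (n + 2) \<le> \<theta> ^ n" using th by (intro power_decreasing) auto
    then have "(B + 1) * \<theta> ^ (n + 2) \<le> (B + 1) * \<theta> ^ n" using B0 by (intro mult_left_mono) auto
    moreover have "(B + 1) * \<theta> ^ n < (1/2) * (1 - \<theta>)^2" using n B0 by (simp add: field_simps)
    ultimately have "(B + 1) * \<theta> ^ (n + 2) \<le> (1/2) * (1 - \<theta>)^2" by linarith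
    moreover have "B * \<theta> ^ (n + 2) \<le> (B + 1) * \<theta> ^ (n + 2)" using th by (intro mult_right_mono) auto
    ultimately have "B * \<theta> ^ (n + 2) \<le> (1/2) * (1 - \<theta>)^2" by linarith
    then have "E n \<le> 1/2" using th by (simp add: E_def divide_le_eq)
    then show ?thesis by (rule that)
  qed
  define m0 where "m0 = Min (u ` {T..T+R})"
  have m0: "0 < m0" using pos by (auto simp: m0_def)
  have m0le: "m0 \<le> u t" if "t \<in> {T..T+R}" for t using that by (auto simp: m0_def)
  define G where "G n = m0 * (1/2 + E (max n R))" for n
  have Gle: "G n \<le> m0" for n
  proof -
    have "E (max n R) \<le> E R" by (rule Emono) simp
    then show ?thesis using R m0 unfolding G_def by (simp add: mult_left_le)
  qed
  have Gge: "m0 / 2 \<le> G n" for n using E0[of "max n R"] m0 unfolding G_def by (simp add: field_simps)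
  have Gmono: "G m \<le> G n" if "n \<le> m" for m n
    using Emono[of "max n R" "max m R"] that m0 unfolding G_def by (simp add: mult_left_mono)
  have main: "G n \<le> u (T + n)" for n
  proof (induction n rule: less_induct)
    case (less n)
    show ?case
    proof (cases "n \<le> R")
      case True
      then have "T + n \<in> {T..T+R}" by simp
      then show ?thesis using Gle[of n] m0le[of "T + n"] by linarith
    next
      case False
      then have n1: "n \<ge> 1" "n - 1 \<ge> R" by auto
      have "u (T + n) = (\<Sum>i\<le>T + n. w i * u (T + n - i))" using ur n1 by simp
      also have "\<dots> \<ge> (\<Sum>i\<in>{1..n}. w i * u (T + n - i))"
        using wn unn by (intro sum_mono2) (auto intro: mult_nonneg_nonneg)
      finally have s1: "(\<Sum>i\<in>{1..n}. w i * u (T + n - i)) \<le> u (T + n)" .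
      have s2: "(\<Sum>i\<in>{1..n}. w i * G (n - 1)) \<le> (\<Sum>i\<in>{1..n}. w i * u (T + n - i))"
      proof (rule sum_mono)
        fix i assume i: "i \<in> {1..n}"
        have "G (n - 1) \<le> G (n - i)" using i by (intro Gmono) auto
        also have "G (n - i) \<le> u (T + (n - i))" using i by (intro less.IH) auto
        also have "T + (n - i) = T + n - i" using i by auto
        finally show "w i * G (n - 1) \<le> w i * u (T + n - i)" using wn by (simp add: mult_left_mono)
      qed
      have "(\<Sum>i\<in>{1..n}. w i) = (\<Sum>i\<le>n. w i)"
      proof -
        have "{..n} = insert 0 {1..n}" by auto
        then show ?thesis using w0 by simp
      qed
      then have s3: "1 - e n \<le> (\<Sum>i\<in>{1..n}. w i)" using tl[of n] by simp
      have G0: "0 \<le> G (n - 1)" using Gge[of "n - 1"] m0 by linarith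
      have "G (n - 1) * (1 - e n) \<le> G (n - 1) * (\<Sum>i\<in>{1..n}. w i)" using s3 G0 by (intro mult_left_mono)
      also have "\<dots> = (\<Sum>i\<in>{1..n}. w i * G (n - 1))" by (simp add: sum_distrib_left mult.commute)
      finally have s4: "G (n - 1) * (1 - e n) \<le> u (T + n)" using s1 s2 by linarith
      have "G n = G (n - 1) - m0 * e n"
        using Estep[OF n1(1)] n1 False unfolding G_def by (simp add: max_def algebra_simps)
      also have "\<dots> \<le> G (n - 1) * (1 - e n)"
      proof -
        have "G (n - 1) * e n \<le> m0 * e n" using Gle[of "n - 1"] e0[of n] by (intro mult_right_mono)
        then show ?thesis by (simp add: algebra_simps)
      qed
      finally show ?thesis using s4 by linarith
    qed
  qed
  show ?thesis
  proof (intro exI[of _ "m0 / 2"] conjI allI impI)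
    show "0 < m0 / 2" using m0 by simp
    fix t assume "T \<le> t"
    then have "G (t - T) \<le> u t" using main[of "t - T"] by simp
    then show "m0 / 2 \<le> u t" using Gge[of "t - T"] by linarith
  qed
qed




definition y0 :: real where "y0 = sqrt 2 - 1"
definition y1 :: real where "y1 = 9 / 20"

lemma sqrt2_bounds: "1.4 < sqrt (2::real)" "sqrt (2::real) < 1.45"
proof -
  have "(1.4::real)^2 < 2" by (simp add: power2_eq_square)
  then show "1.4 < sqrt (2::real)" by (rule real_less_rsqrt)
  have "2 < (1.45::real)^2" by (simp add: power2_eq_square)
  then show "sqrt (2::real) < 1.45" by (intro real_less_lsqrt) auto
qed

lemma y0_facts: "0 < y0" "y0 < y1" "y1 < 1/2" "y0 ^ 2 / (1 - 2 * y0) = 1"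
proof -
  show "0 < y0" "y0 < y1" using sqrt2_bounds by (auto simp: y0_def y1_def)
  show "y1 < 1/2" by (simp add: y1_def)
  have s: "sqrt (2::real) ^ 2 = 2" by simp
  have "y0 ^ 2 = 3 - 2 * sqrt 2" unfolding y0_def power2_diff s by simp
  moreover have "1 - 2 * y0 = 3 - 2 * sqrt 2" by (simp add: y0_def)
  moreover have "3 - 2 * sqrt (2::real) \<noteq> 0" using sqrt2_bounds by auto
  ultimately show "y0 ^ 2 / (1 - 2 * y0) = 1" by simp
qed

lemma term_le_sums: "f sums s \<Longrightarrow> (\<forall>n. 0 \<le> f n) \<Longrightarrow> f j \<le> (s::real)"
  using sum_le_suminf[of f "{j}"] by (auto simp: sums_iff)

lemma partial_le_sums: "f sums s \<Longrightarrow> (\<forall>n. 0 \<le> f n) \<Longrightarrow> (\<Sum>i\<le>n. f i) \<le> (s::real)"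
  using sum_le_suminf[of f "{..n}"] by (auto simp: sums_iff)

context
  fixes k :: nat
  assumes k1: "k \<ge> 1"
begin

lemma sigS_pos: "S \<subseteq> Mats k \<Longrightarrow> \<forall>x\<in>S. sig x \<ge> 1"
  using sig_ge1 k1 by blast

lemma finS: "S \<subseteq> Mats k \<Longrightarrow> \<forall>i. finite (fib S sig i)"
proof
  fix i assume "S \<subseteq> Mats k"
  then have "fib S sig i \<subseteq> fib (Mats k) sig i" by (auto simp: fib_def)
  then show "finite (fib S sig i)" using fin_fib_mats by (rule finite_subset)
qed

lemma ren_rec:
  assumes S: "S \<subseteq> Mats k" and t: "t \<ge> 1"
  shows "real (card (LS S sig t)) * y0 ^ t =
     (\<Sum>i\<le>t. (real (card (fib S sig i)) * y0 ^ i) * (real (card (LS S sig (t - i))) * y0 ^ (t - i)))"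
proof -
  have "real (card (LS S sig t)) * y0 ^ t = (\<Sum>i\<le>t. real (card (fib S sig i) * card (LS S sig (t - i)))) * y0 ^ t"
    using LS_card[OF sigS_pos[OF S] finS[OF S] t] by simp
  also have "\<dots> = (\<Sum>i\<le>t. (real (card (fib S sig i)) * y0 ^ i) * (real (card (LS S sig (t - i))) * y0 ^ (t - i)))"
    unfolding sum_distrib_right
  proof (rule sum.cong)
    fix i assume "i \<in> {..t}"
    then have "y0 ^ t = y0 ^ i * y0 ^ (t - i)" by (simp add: power_add[symmetric])
    then show "real (card (fib S sig i) * card (LS S sig (t - i))) * y0 ^ t =
        real (card (fib S sig i)) * y0 ^ i * (real (card (LS S sig (t - i))) * y0 ^ (t - i))"
      by (simp add: algebra_simps)
  qed simp
  finally show ?thesis .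
qed

lemma ren_0: "S \<subseteq> Mats k \<Longrightarrow> real (card (LS S sig 0)) * y0 ^ 0 = 1"
  using LS_0[OF sigS_pos] by simp

lemma ren_w0: "S \<subseteq> Mats k \<Longrightarrow> real (card (fib S sig 0)) * y0 ^ 0 = 0"
  using fib0[OF sigS_pos] by simp

definition B0 :: real where "B0 = (y1 ^ 2 / (1 - 2 * y1)) ^ (k * k)"
definition th0 :: real where "th0 = y0 / y1"

lemma th0: "0 \<le> th0" "th0 < 1" using y0_facts by (auto simp: th0_def)

lemma w_sums: "(\<lambda>j. real (card (fib (Mats k) sig j)) * y0 ^ j) sums 1"
  using mats_gf[of y0 k] y0_facts by simp

lemma w_bound: "real (card (fib S sig j)) * y0 ^ j \<le> B0 * th0 ^ j" if S: "S \<subseteq> Mats k"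
proof -
  have y: "0 \<le> y1" "y1 < 1/2" using y0_facts by auto
  have "real (card (fib (Mats k) sig j)) * y1 ^ j \<le> B0"
    unfolding B0_def by (rule term_le_sums[OF mats_gf[OF y]]) (use y in auto)
  moreover have "card (fib S sig j) \<le> card (fib (Mats k) sig j)"
    using S fin_fib_mats by (intro card_mono) (auto simp: fib_def)
  ultimately have "real (card (fib S sig j)) * y1 ^ j \<le> B0"
    by (meson order.trans mult_right_mono of_nat_le_iff y(1) zero_le_power)
  then have "real (card (fib S sig j)) * y1 ^ j * th0 ^ j \<le> B0 * th0 ^ j"
    using th0 by (intro mult_right_mono) auto
  moreover have "y1 ^ j * th0 ^ j = y0 ^ j" using y0_facts by (simp add: th0_def power_divide)
  ultimately show ?thesis by (simp add: mult.assoc)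
qed

lemma LS_fin: "S \<subseteq> Mats k \<Longrightarrow> finite (LS S sig t)"
  by (rule LS_finite[OF sigS_pos finS])

lemma u_lower: "\<exists>c>0. \<forall>t\<ge>2 * (k * k). c \<le> real (card (LS (Mats k) sig t)) * y0 ^ t"
proof -
  let ?w = "\<lambda>j. real (card (fib (Mats k) sig j)) * y0 ^ j"
  let ?u = "\<lambda>t. real (card (LS (Mats k) sig t)) * y0 ^ t"
  have pos: "\<forall>t\<ge>2 * (k * k). 0 < ?u t"
  proof (intro allI impI)
    fix t assume t: "2 * (k * k) \<le> t"
    obtain M where M: "M \<in> Mats k" "sig M = t" using exists_sig[OF k1 t] by blast
    then have "[M] \<in> LS (Mats k) sig t" by (simp add: LS_def)
    then have "card (LS (Mats k) sig t) \<noteq> 0" using LS_fin[of "Mats k" t] by auto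
    then show "0 < ?u t" using y0_facts by simp
  qed
  show ?thesis
  proof (rule ren_lower[of ?w ?u B0 th0])
    show "?w 0 = 0" using ren_w0[of "Mats k"] by simp
    show "\<forall>j. 0 \<le> ?w j" using y0_facts by simp
    show "\<forall>t\<ge>1. ?u t = (\<Sum>i\<le>t. ?w i * ?u (t - i))" using ren_rec[of "Mats k"] by simp
    show "\<forall>j. ?w j \<le> B0 * th0 ^ j" using w_bound[of "Mats k"] by simp
    show "0 \<le> th0" "th0 < 1" by (rule th0)+
    show "?w sums 1" by (rule w_sums)
    show "\<forall>t\<ge>2 * (k * k). 0 < ?u t" by (rule pos)
    show "\<forall>t. 0 \<le> ?u t" using y0_facts by simp
  qed
qed

lemma fib_minus: "C \<in> Mats k \<Longrightarrow> real (card (fib (Mats k - {C}) sig i)) * y0 ^ i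
    = real (card (fib (Mats k) sig i)) * y0 ^ i - (if i = sig C then y0 ^ i else 0)"
proof -
  assume C: "C \<in> Mats k"
  show ?thesis
  proof (cases "i = sig C")
    case True
    then have "fib (Mats k - {C}) sig i = fib (Mats k) sig i - {C}" "C \<in> fib (Mats k) sig i"
      using C by (auto simp: fib_def)
    then have "card (fib (Mats k - {C}) sig i) = card (fib (Mats k) sig i) - 1"
      using fin_fib_mats by simp
    moreover have "card (fib (Mats k) sig i) \<ge> 1"
      using \<open>C \<in> fib (Mats k) sig i\<close> fin_fib_mats by (metis One_nat_def Suc_leI card_gt_0_iff empty_iff)
    ultimately show ?thesis using True by (simp add: of_nat_diff algebra_simps)
  next
    case False
    then have "fib (Mats k - {C}) sig i = fib (Mats k) sig i" by (auto simp: fib_def)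
    then show ?thesis using False by simp
  qed
qed

lemma wC_partial: "C \<in> Mats k \<Longrightarrow> (\<Sum>i\<le>n. real (card (fib (Mats k - {C}) sig i)) * y0 ^ i) \<le> 1 - y0 ^ sig C"
proof -
  assume C: "C \<in> Mats k"
  let ?wC = "\<lambda>i. real (card (fib (Mats k - {C}) sig i)) * y0 ^ i"
  let ?w = "\<lambda>i. real (card (fib (Mats k) sig i)) * y0 ^ i"
  define M where "M = max n (sig C)"
  have "(\<Sum>i\<le>n. ?wC i) \<le> (\<Sum>i\<le>M. ?wC i)"
    using y0_facts by (intro sum_mono2) (auto simp: M_def)
  also have "\<dots> = (\<Sum>i\<le>M. ?w i) - (\<Sum>i\<le>M. if i = sig C then y0 ^ i else 0)"
    using fib_minus[OF C] by (simp add: sum_subtractf)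
  also have "(\<Sum>i\<le>M. if i = sig C then y0 ^ i else 0) = y0 ^ sig C" by (simp add: M_def)
  also have "(\<Sum>i\<le>M. ?w i) \<le> 1" by (rule partial_le_sums[OF w_sums]) (use y0_facts in simp)
  finally show ?thesis by simp
qed

lemma vC_props:
  assumes C: "C \<in> Mats k"
  shows "(\<exists>\<rho>. 0 < \<rho> \<and> \<rho> < 1 \<and> (\<forall>t. real (card (LS (Mats k - {C}) sig t)) * y0 ^ t \<le> \<rho> ^ t))
     \<and> (\<forall>t. 0 \<le> real (card (LS (Mats k - {C}) sig t)) * y0 ^ t \<and> real (card (LS (Mats k - {C}) sig t)) * y0 ^ t \<le> 1)"
proof -
  let ?S = "Mats k - {C}"
  let ?w = "\<lambda>j. real (card (fib ?S sig j)) * y0 ^ j"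
  let ?u = "\<lambda>t. real (card (LS ?S sig t)) * y0 ^ t"
  have S: "?S \<subseteq> Mats k" by auto
  have w0: "?w 0 = 0" using ren_w0[OF S] by simp
  have wn: "\<forall>j. 0 \<le> ?w j" using y0_facts by simp
  have u0: "?u 0 = 1" using ren_0[OF S] by simp
  have ur: "\<forall>t\<ge>1. ?u t = (\<Sum>i\<le>t. ?w i * ?u (t - i))" using ren_rec[OF S] by simp
  have wp: "\<forall>n. (\<Sum>i\<le>n. ?w i) \<le> 1 - y0 ^ sig C" using wC_partial[OF C] by simp
  have lt: "1 - y0 ^ sig C < 1" using y0_facts by simp
  have "\<exists>\<rho>. 0 < \<rho> \<and> \<rho> < 1 \<and> (\<forall>t. ?u t \<le> \<rho> ^ t)"
    by (rule ren_decay[OF w0 wn u0 ur _ th0 wp lt, where B=B0]) (use w_bound[OF S] in simp)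
  moreover have "\<forall>t. 0 \<le> ?u t \<and> ?u t \<le> 1"
  proof
    fix t
    have "0 \<le> y0 ^ sig C" using y0_facts by simp
    then have "\<forall>n. (\<Sum>i\<le>n. ?w i) \<le> 1"
    proof (intro allI)
      fix n assume "0 \<le> y0 ^ sig C"
      then show "(\<Sum>i\<le>n. ?w i) \<le> 1" using wp[rule_format, of n] by linarith
    qed
    then show "0 \<le> ?u t \<and> ?u t \<le> 1" by (rule ren_bound[OF w0 wn u0 ur])
  qed
  ultimately show ?thesis by blast
qed

lemma inst_weight:
  assumes "(Ws, C) \<in> Uall k"
  shows "sum_list (map sig (Ws @ [C])) = Suc (size2_inst k (Ws, C))"
proof -
  have v: "\<forall>W\<in>set Ws. valid_mat k W" "valid_mat k C" using assms by (auto simp: Uall_def)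
  have "map sig Ws = map (\<lambda>W. Suc (size2_mat k W)) Ws"
    by (rule map_cong) (use v k1 sig_size2 in auto)
  then have "sum_list (map sig Ws) = sum_list (map (\<lambda>W. Suc (size2_mat k W)) Ws)" by (rule arg_cong)
  also have "\<dots> = sum_list (map (size2_mat k) Ws) + length Ws" by (rule sum_list_Suc)
  finally have "sum_list (map sig Ws) = sum_list (map (size2_mat k) Ws) + length Ws" .
  then show ?thesis using v k1 sig_size2[of k C] by (simp add: size2_inst_def)
qed

lemma Um_bij: "bij_betw (\<lambda>(Ws, C). Ws @ [C]) (Um k m) (LS (Mats k) sig (Suc m))"
proof -
  have inj: "inj_on (\<lambda>(Ws, C). Ws @ [C]) (Um k m)" by (auto simp: inj_on_def)
  have img: "(\<lambda>(Ws, C). Ws @ [C]) ` (Um k m) = LS (Mats k) sig (Suc m)"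
  proof (rule set_eqI)
    fix xs
    show "xs \<in> (\<lambda>(Ws, C). Ws @ [C]) ` (Um k m) \<longleftrightarrow> xs \<in> LS (Mats k) sig (Suc m)"
    proof
      assume "xs \<in> (\<lambda>(Ws, C). Ws @ [C]) ` (Um k m)"
      then obtain Ws C where I: "(Ws, C) \<in> Um k m" "xs = Ws @ [C]" by auto
      then have U: "(Ws, C) \<in> Uall k" "size2_inst k (Ws, C) = m" by (auto simp: Um_def)
      then have "set xs \<subseteq> Mats k" using I by (auto simp: Uall_def Mats_def)
      then show "xs \<in> LS (Mats k) sig (Suc m)" using inst_weight[OF U(1)] U(2) I by (simp add: LS_def)
    next
      assume a: "xs \<in> LS (Mats k) sig (Suc m)"
      then have "xs \<noteq> []" by (auto simp: LS_def)
      then have xs: "xs = butlast xs @ [last xs]" by simp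
      have U: "(butlast xs, last xs) \<in> Uall k" using a xs
        by (auto simp: LS_def Uall_def Mats_def) (metis in_set_butlastD subsetD mem_Collect_eq, metis last_in_set \<open>xs \<noteq> []\<close> subsetD mem_Collect_eq)
      have "Suc (size2_inst k (butlast xs, last xs)) = Suc m"
        using inst_weight[OF U] xs a by (simp add: LS_def)
      then have "(butlast xs, last xs) \<in> Um k m" using U by (simp add: Um_def)
      then show "xs \<in> (\<lambda>(Ws, C). Ws @ [C]) ` (Um k m)" using xs by (auto intro!: image_eqI[of _ _ "(butlast xs, last xs)"])
    qed
  qed
  show ?thesis using inj img by (simp add: bij_betw_def)
qed

lemma Um_card: "card (Um k m) = card (LS (Mats k) sig (Suc m))"
  using bij_betw_same_card[OF Um_bij] .

lemma Um_finite: "finite (Um k m)"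
  using bij_betw_finite[OF Um_bij] LS_fin[of "Mats k"] by auto

definition Good :: "inst set" where "Good = {I \<in> Uall k. snd I \<in> set (fst I)}"

lemma bad_sub: "Um k m - Good \<subseteq> (\<Union>C\<in>{C\<in>Mats k. sig C \<le> Suc m}. (\<lambda>Ws. (Ws, C)) ` LS (Mats k - {C}) sig (Suc m - sig C))"
proof
  fix I assume I: "I \<in> Um k m - Good"
  obtain Ws C where IWC: "I = (Ws, C)" by (cases I)
  have U: "(Ws, C) \<in> Uall k" "size2_inst k (Ws, C) = m" "C \<notin> set Ws" using I IWC by (auto simp: Um_def Good_def)
  have w: "sum_list (map sig Ws) + sig C = Suc m" using inst_weight[OF U(1)] U(2) by simp
  have C: "C \<in> Mats k" using U(1) by (auto simp: Uall_def Mats_def)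
  have "Ws \<in> LS (Mats k - {C}) sig (Suc m - sig C)" using U(1,3) w by (auto simp: LS_def Uall_def Mats_def)
  then show "I \<in> (\<Union>C\<in>{C\<in>Mats k. sig C \<le> Suc m}. (\<lambda>Ws. (Ws, C)) ` LS (Mats k - {C}) sig (Suc m - sig C))"
    using C w IWC by auto
qed

lemma Fm_finite: "finite {C\<in>Mats k. sig C \<le> n}"
  by (rule fin_le) (simp add: fin_fib_mats)

lemma bad_card: "card (Um k m - Good) \<le> (\<Sum>C\<in>{C\<in>Mats k. sig C \<le> Suc m}. card (LS (Mats k - {C}) sig (Suc m - sig C)))"
proof -
  have "card (Um k m - Good) \<le> card (\<Union>C\<in>{C\<in>Mats k. sig C \<le> Suc m}. (\<lambda>Ws. (Ws, C)) ` LS (Mats k - {C}) sig (Suc m - sig C))"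
    by (rule card_mono[OF _ bad_sub]) (use Fm_finite LS_fin in auto)
  also have "\<dots> \<le> (\<Sum>C\<in>{C\<in>Mats k. sig C \<le> Suc m}. card ((\<lambda>Ws. (Ws, C)) ` LS (Mats k - {C}) sig (Suc m - sig C)))"
    by (rule card_UN_le[OF Fm_finite])
  also have "\<dots> \<le> (\<Sum>C\<in>{C\<in>Mats k. sig C \<le> Suc m}. card (LS (Mats k - {C}) sig (Suc m - sig C)))"
    by (intro sum_mono card_image_le) (use LS_fin in auto)
  finally show ?thesis .
qed

lemma vC_shift_lim:
  assumes C: "C \<in> Mats k"
  shows "(\<lambda>m. real (card (LS (Mats k - {C}) sig (Suc m - sig C))) * y0 ^ (Suc m - sig C)) \<longlonglongrightarrow> 0"
proof -
  let ?v = "\<lambda>t. real (card (LS (Mats k - {C}) sig t)) * y0 ^ t"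
  obtain \<rho> where \<rho>: "0 < \<rho>" "\<rho> < 1" "\<forall>t. ?v t \<le> \<rho> ^ t" and v0: "\<forall>t. 0 \<le> ?v t"
    using vC_props[OF C] by blast
  have "?v \<longlonglongrightarrow> 0"
  proof (rule tendsto_sandwich[of "\<lambda>_. 0" _ _ "\<lambda>t. \<rho> ^ t"])
    show "\<forall>\<^sub>F n in sequentially. 0 \<le> ?v n" using v0 by simp
    show "\<forall>\<^sub>F n in sequentially. ?v n \<le> \<rho> ^ n" using \<rho> by simp
    show "(\<lambda>n. \<rho> ^ n) \<longlonglongrightarrow> 0" using \<rho> by (intro LIMSEQ_power_zero) simp
  qed simp
  then have "(\<lambda>m. ?v (Suc m)) \<longlonglongrightarrow> 0" by (rule LIMSEQ_Suc)
  then have "(\<lambda>m. ?v (Suc (m + sig C) - sig C)) \<longlonglongrightarrow> 0" by (simp add: Suc_diff_le)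
  then show ?thesis by (rule LIMSEQ_offset)
qed

lemma B0_pos: "0 < B0"
  using y0_facts by (simp add: B0_def y1_def)

lemma D_lim: "(\<lambda>m. real (card (Um k m - Good)) / real (card (Um k m))) \<longlonglongrightarrow> 0"
proof (rule metric_LIMSEQ_I)
  fix \<epsilon> :: real assume \<epsilon>: "0 < \<epsilon>"
  let ?w = "\<lambda>j. real (card (fib (Mats k) sig j)) * y0 ^ j"
  let ?v = "\<lambda>C t. real (card (LS (Mats k - {C}) sig t)) * y0 ^ t"
  obtain c where c: "c > 0" "\<forall>t\<ge>2 * (k * k). c \<le> real (card (LS (Mats k) sig t)) * y0 ^ t"
    using u_lower by blast
  have X: "0 < c * \<epsilon> / 4 * (1 - th0) / (B0 + 1)" using c \<epsilon> th0 B0_pos by simp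
  obtain s0 where s0: "th0 ^ s0 < c * \<epsilon> / 4 * (1 - th0) / (B0 + 1)"
    using real_arch_pow_inv[OF X th0(2)] by blast
  have es0: "B0 * th0 ^ Suc s0 / (1 - th0) \<le> c * \<epsilon> / 4"
  proof -
    have "th0 ^ Suc s0 \<le> th0 ^ s0" using th0 by (intro power_decreasing) auto
    then have "(B0 + 1) * th0 ^ Suc s0 \<le> (B0 + 1) * th0 ^ s0" using B0_pos by (intro mult_left_mono) auto
    moreover have "(B0 + 1) * th0 ^ s0 < c * \<epsilon> / 4 * (1 - th0)" using s0 B0_pos by (simp add: field_simps)
    moreover have "B0 * th0 ^ Suc s0 \<le> (B0 + 1) * th0 ^ Suc s0" using th0 by (intro mult_right_mono) auto
    ultimately have "B0 * th0 ^ Suc s0 \<le> c * \<epsilon> / 4 * (1 - th0)" by linarith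
    then show ?thesis using th0 by (simp add: divide_le_eq)
  qed
  define F0 where "F0 = {C\<in>Mats k. sig C \<le> s0}"
  have F0fin: "finite F0" unfolding F0_def by (rule Fm_finite)
  have glim: "(\<lambda>m. \<Sum>C\<in>F0. ?v C (Suc m - sig C)) \<longlonglongrightarrow> 0"
    by (rule tendsto_null_sum) (use vC_shift_lim in \<open>auto simp: F0_def\<close>)
  have ce4: "0 < c * \<epsilon> / 4" using c \<epsilon> by simp
  obtain M1 where M1: "\<forall>m\<ge>M1. (\<Sum>C\<in>F0. ?v C (Suc m - sig C)) < c * \<epsilon> / 4"
    using order_tendstoD(2)[OF glim ce4] by (auto simp: eventually_sequentially)
  show "\<exists>no. \<forall>m\<ge>no. dist (real (card (Um k m - Good)) / real (card (Um k m))) 0 < \<epsilon>"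
  proof (intro exI[of _ "max (max M1 s0) (2 * (k * k))"] allI impI)
    fix m assume m: "max (max M1 s0) (2 * (k * k)) \<le> m"
    define Fm where "Fm = {C\<in>Mats k. sig C \<le> Suc m}"
    have Fmfin: "finite Fm" unfolding Fm_def by (rule Fm_finite)
    have F0Fm: "F0 \<subseteq> Fm" using m by (auto simp: F0_def Fm_def)
    define Bm where "Bm = card (Um k m - Good)"
    define Nm where "Nm = card (LS (Mats k) sig (Suc m))"
    have vb: "0 \<le> ?v C t \<and> ?v C t \<le> 1" if "C \<in> Mats k" for C t using vC_props[OF that] by blast
    have h1: "real Bm * y0 ^ Suc m \<le> (\<Sum>C\<in>Fm. ?v C (Suc m - sig C) * y0 ^ sig C)"
    proof -
      have "real Bm \<le> (\<Sum>C\<in>Fm. real (card (LS (Mats k - {C}) sig (Suc m - sig C))))"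
        using bad_card[of m] unfolding Bm_def Fm_def by (simp flip: of_nat_sum)
      then have "real Bm * y0 ^ Suc m \<le> (\<Sum>C\<in>Fm. real (card (LS (Mats k - {C}) sig (Suc m - sig C)))) * y0 ^ Suc m"
        using y0_facts by (intro mult_right_mono) auto
      also have "\<dots> = (\<Sum>C\<in>Fm. ?v C (Suc m - sig C) * y0 ^ sig C)"
        unfolding sum_distrib_right
      proof (rule sum.cong)
        fix C assume "C \<in> Fm"
        then have "sig C \<le> Suc m" by (simp add: Fm_def)
        then have "y0 ^ Suc m = y0 ^ (Suc m - sig C) * y0 ^ sig C" by (simp add: power_add[symmetric])
        then show "real (card (LS (Mats k - {C}) sig (Suc m - sig C))) * y0 ^ Suc m = ?v C (Suc m - sig C) * y0 ^ sig C"
          by (simp add: mult.assoc)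
      qed simp
      finally show ?thesis .
    qed
    have h2: "(\<Sum>C\<in>Fm. ?v C (Suc m - sig C) * y0 ^ sig C)
        = (\<Sum>C\<in>F0. ?v C (Suc m - sig C) * y0 ^ sig C) + (\<Sum>C\<in>Fm - F0. ?v C (Suc m - sig C) * y0 ^ sig C)"
      using Fmfin F0Fm by (simp add: sum.subset_diff algebra_simps)
    have h3: "(\<Sum>C\<in>F0. ?v C (Suc m - sig C) * y0 ^ sig C) < c * \<epsilon> / 4"
    proof -
      have "(\<Sum>C\<in>F0. ?v C (Suc m - sig C) * y0 ^ sig C) \<le> (\<Sum>C\<in>F0. ?v C (Suc m - sig C))"
      proof (rule sum_mono)
        fix C assume "C \<in> F0"
        then have "C \<in> Mats k" by (simp add: F0_def)
        moreover have "y0 ^ sig C \<le> 1" using y0_facts by (intro power_le_one) auto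
        ultimately show "?v C (Suc m - sig C) * y0 ^ sig C \<le> ?v C (Suc m - sig C)"
          using vb by (simp add: mult_left_le)
      qed
      also have "\<dots> < c * \<epsilon> / 4" using M1 m by auto
      finally show ?thesis .
    qed
    have h4: "(\<Sum>C\<in>Fm - F0. ?v C (Suc m - sig C) * y0 ^ sig C) \<le> c * \<epsilon> / 4"
    proof -
      have "(\<Sum>C\<in>Fm - F0. ?v C (Suc m - sig C) * y0 ^ sig C) \<le> (\<Sum>C\<in>Fm - F0. y0 ^ sig C)"
      proof (rule sum_mono)
        fix C assume "C \<in> Fm - F0"
        then have "C \<in> Mats k" by (simp add: Fm_def)
        then show "?v C (Suc m - sig C) * y0 ^ sig C \<le> y0 ^ sig C"
          using vb y0_facts by (simp add: mult_left_le_one_le)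
      qed
      also have "(\<Sum>C\<in>Fm - F0. y0 ^ sig C) = (\<Sum>j\<in>{s0<..Suc m}. ?w j)"
      proof -
        have eqF: "Fm - F0 = (\<Union>j\<in>{s0<..Suc m}. fib (Mats k) sig j)"
          by (auto simp: Fm_def F0_def fib_def)
        have "(\<Sum>C\<in>(\<Union>j\<in>{s0<..Suc m}. fib (Mats k) sig j). y0 ^ sig C) = (\<Sum>j\<in>{s0<..Suc m}. \<Sum>C\<in>fib (Mats k) sig j. y0 ^ sig C)"
          by (rule sum.UNION_disjoint) (use fin_fib_mats in \<open>auto simp: fib_def\<close>)
        also have "\<dots> = (\<Sum>j\<in>{s0<..Suc m}. ?w j)"
          by (rule sum.cong) (auto simp: fib_def)
        finally show ?thesis unfolding eqF .
      qed
      also have "\<dots> \<le> 1 - (\<Sum>j\<le>s0. ?w j)"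
      proof -
        have "{..Suc m} = {..s0} \<union> {s0<..Suc m}" using m by auto
        then have "(\<Sum>j\<le>Suc m. ?w j) = (\<Sum>j\<le>s0. ?w j) + (\<Sum>j\<in>{s0<..Suc m}. ?w j)"
          by (simp only:) (rule sum.union_disjoint, auto)
        moreover have "(\<Sum>j\<le>Suc m. ?w j) \<le> 1" by (rule partial_le_sums[OF w_sums]) (use y0_facts in simp)
        ultimately show ?thesis by linarith
      qed
      also have "\<dots> \<le> B0 * th0 ^ Suc s0 / (1 - th0)"
        by (rule tail_bound[OF w_sums _ th0]) (use w_bound[of "Mats k"] in simp)
      also have "\<dots> \<le> c * \<epsilon> / 4" by (rule es0)
      finally show ?thesis .
    qed
    have num: "real Bm * y0 ^ Suc m < c * \<epsilon> / 2" using h1 h2 h3 h4 by linarith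
    have "2 * (k * k) \<le> Suc m" using m by simp
    then have den: "c \<le> real Nm * y0 ^ Suc m" using c(2) unfolding Nm_def by blast
    have Nm0: "0 < real Nm * y0 ^ Suc m" using den c by linarith
    have D: "real Bm / real Nm = (real Bm * y0 ^ Suc m) / (real Nm * y0 ^ Suc m)"
      using y0_facts by simp
    have "real Bm / real Nm \<le> (c * \<epsilon> / 2) / c"
    proof -
      have "(real Bm * y0 ^ Suc m) / (real Nm * y0 ^ Suc m) \<le> (c * \<epsilon> / 2) / (real Nm * y0 ^ Suc m)"
        using num Nm0 by (intro divide_right_mono) auto
      also have "\<dots> \<le> (c * \<epsilon> / 2) / c"
        using den c \<epsilon> by (intro divide_left_mono) auto
      finally show ?thesis using D by simp
    qed
    also have "\<dots> < \<epsilon>" using c \<epsilon> by simp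
    finally have lt: "real Bm / real Nm < \<epsilon>" .
    have "0 \<le> real Bm / real Nm" by simp
    then show "dist (real (card (Um k m - Good)) / real (card (Um k m))) 0 < \<epsilon>"
      using lt Um_card[of m] unfolding Bm_def Nm_def by simp
  qed
qed

lemma density_good: "density_one k Good"
proof -
  let ?D = "\<lambda>m. real (card (Um k m - Good)) / real (card (Um k m))"
  let ?r = "\<lambda>m. real (card (Good \<inter> Um k m)) / real (card (Um k m))"
  have "(\<lambda>m. 1 - ?D m) \<longlonglongrightarrow> 1 - 0" by (intro tendsto_diff tendsto_const D_lim)
  then have l: "(\<lambda>m. 1 - ?D m) \<longlonglongrightarrow> 1" by simp
  have ev: "\<forall>\<^sub>F m in sequentially. 1 - ?D m = ?r m"
  proof (rule eventually_sequentiallyI[of "2 * (k * k)"])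
    fix m assume m: "2 * (k * k) \<le> m"
    then have "2 * (k * k) \<le> Suc m" by simp
    then obtain M where M: "M \<in> Mats k" "sig M = Suc m" using exists_sig[OF k1] by blast
    then have "[M] \<in> LS (Mats k) sig (Suc m)" by (simp add: LS_def)
    then have "card (LS (Mats k) sig (Suc m)) \<noteq> 0" using LS_fin[of "Mats k" "Suc m"] by auto
    then have pos: "0 < card (Um k m)" using Um_card[of m] by simp
    have "Good \<inter> Um k m = Um k m - (Um k m - Good)" by auto
    then have "card (Good \<inter> Um k m) = card (Um k m) - card (Um k m - Good)"
      using Um_finite[of m] by (simp add: card_Diff_subset)
    moreover have "card (Um k m - Good) \<le> card (Um k m)" using Um_finite[of m] by (intro card_mono) auto
    ultimately have "real (card (Good \<inter> Um k m)) = real (card (Um k m)) - real (card (Um k m - Good))"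
      by simp
    then show "1 - ?D m = ?r m" using pos by (simp add: field_simps)
  qed
  have "?r \<longlonglongrightarrow> 1" by (rule Lim_transform_eventually[OF l ev])
  then show ?thesis unfolding density_one_def by (rule tendsto_mono[rotated]) simp
qed

end


lemma factors_zero: "factors (replicate (length Ws) 0) Ws = []"
  by (induction Ws) (auto simp: factors_def)

lemma witness:
  assumes "C \<in> set Ws"
  shows "\<exists>xs. length xs = length Ws \<and> set xs \<subseteq> {0, 1} \<and> (\<exists>x\<in>set xs. x \<noteq> 0) \<and> factors xs Ws = [C]"
  using assms
proof (induction Ws)
  case Nil then show ?case by simp
next
  case (Cons W Ws)
  show ?case
  proof (cases "W = C")
    case True
    let ?xs = "1 # replicate (length Ws) 0"
    have "factors ?xs (W # Ws) = [C]" using True factors_zero[of Ws] by (simp add: factors_def)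
    then show ?thesis by (intro exI[of _ ?xs]) auto
  next
    case False
    then obtain xs where xs: "length xs = length Ws" "set xs \<subseteq> {0, 1}" "\<exists>x\<in>set xs. x \<noteq> 0" "factors xs Ws = [C]"
      using Cons by auto
    have "factors (0 # xs) (W # Ws) = [C]" using xs(4) by (simp add: factors_def)
    then show ?thesis using xs by (intro exI[of _ "0 # xs"]) auto
  qed
qed

lemma mat_prod_single: "mat_prod k [C] = C"
  by (simp add: mat_prod_def)

lemma SSP_of_mem: "C \<in> set Ws \<Longrightarrow> SSP k (Ws, C)"
  using witness[of C Ws] by (auto simp: SSP_def mat_prod_single)

lemma KP_of_mem: "C \<in> set Ws \<Longrightarrow> KP k (Ws, C)"
  using witness[of C Ws] by (auto simp: KP_def mat_prod_single)

lemma gp_from_mem: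
  assumes k: "k \<ge> 1" and P: "\<And>Ws C. C \<in> set Ws \<Longrightarrow> P (Ws, C)"
  shows "generically_poly k P"
  unfolding generically_poly_def
proof (intro exI conjI)
  show "tm_wf 29 11 TMm" by (rule TMm_wf)
  show "\<forall>I\<in>Uall k. let r = tm_state_after TMm (5 * (size2_inst k I + 1) ^ 2) (encode_inst I)
        in r \<in> {1, 2, 3} \<and> (r = 1 \<longrightarrow> P I) \<and> (r = 2 \<longrightarrow> \<not> P I)"
  proof
    fix I assume I: "I \<in> Uall k"
    obtain Ws C where IWC: "I = (Ws, C)" by (cases I)
    show "let r = tm_state_after TMm (5 * (size2_inst k I + 1) ^ 2) (encode_inst I)
        in r \<in> {1, 2, 3} \<and> (r = 1 \<longrightarrow> P I) \<and> (r = 2 \<longrightarrow> \<not> P I)"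
      using tm_inst[OF k, of Ws C] I IWC P by (auto simp: Let_def)
  qed
  have "{I \<in> Uall k. tm_state_after TMm (5 * (size2_inst k I + 1) ^ 2) (encode_inst I) \<noteq> 3} = Good k"
  proof (rule set_eqI)
    fix I :: inst
    obtain Ws C where IWC: "I = (Ws, C)" by (cases I)
    show "I \<in> {I \<in> Uall k. tm_state_after TMm (5 * (size2_inst k I + 1) ^ 2) (encode_inst I) \<noteq> 3} \<longleftrightarrow> I \<in> Good k"
      using tm_inst[OF k, of Ws C] IWC by (auto simp: Good_def[OF k] split: if_splits)
  qed
  then show "density_one k {I \<in> Uall k. tm_state_after TMm (5 * (size2_inst k I + 1) ^ 2) (encode_inst I) \<noteq> 3}"
    using density_good[OF k] by simp
qed

theorem mainTheorem17:
  fixes k :: nat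
  assumes "k \<ge> 1"
  shows "generically_poly k (SSP k) \<and> generically_poly k (KP k)"
  using gp_from_mem[OF assms, of "SSP k"] gp_from_mem[OF assms, of "KP k"] SSP_of_mem KP_of_mem by blast


end
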